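(* Let $A$ be a symmetric skew domain whose boundary paths $P,Q$ are each crossed by $2n$ edges, and let $\sigma\in B_n$. Then in $\mathcal{H}$, \[ T_\sigma Y_A=\sum_{\pi\in B_n}P_A^{\sigma,\pi}\,T_\pi . \]
   Context: $B_n$ is the group of signed permutations of $\pm[1,n]=\{-n,\dots,-1,1,\dots,n\}$ ($\pi(-i)=-\pi(i)$), a Coxeter group with generators $s_0=(-1\ 1)$ and $s_k=(k\ k+1)(-k\ -k-1)$, $1\le k\le n-1$; $l(\pi)$ is the Coxeter length. With formal variables $q,t,\nu,z_1,z_2,\dots$, and $q_0=t$, $q_k=q$ for $k\ge1$, the type $B$ Hecke algebra $\mathcal{H}$ is the algebra over $\mathbb{C}(q,t,\nu,\mathbf z)$ with basis $\{T_w\}_{w\in B_n}$, $T_{\mathrm{id}}=1$, and relations $T_uT_w=T_{uw}$ if $l(uw)=l(u)+l(w)$ and $(T_k+q_k)(T_k-1)=0$ where $T_k=T_{s_k}$. For $p$ a scalar let $R_k(p)=pT_k+(1-p)$. Set $p_{x,y}=\frac{z_xz_y-1}{z_xz_y-q}$ for $x\neq y$ and $p_{x,x}=\frac{z_x^2-1}{(z_x-\nu t)(z_x+1/\nu)}$. A symmetric skew domain $A$ is a finite set of lattice points invariant under $(x,y)\mapsto(y,x)$, consisting of the vertices between two up-left lattice paths $P$ (southwest) and $Q$ (northeast), each invariant under this reflection and each crossed by $2n$ lattice edges; the edges crossing $P$ (resp. $Q$) are labeled $-n,\dots,-1,1,\dots,n$ in increasing order moving up-left. $A^+=\{(x,y)\in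 A: x\le y\}$ and $Y_A=\prod_{(x,y)\in A^+}R_{y-x}(p_{x,y})$, the product taken in an order in which the factor for $(x,y)$ precedes that for $(x',y')\neq(x,y)$ whenever $x\le x'$, $y\le y'$ (this is independent of the chosen order). $P_A^{\sigma,\pi}$ denotes the probability (a rational function of the parameters) in the colored half-space stochastic six-vertex model restricted to $A$, with color $\sigma(j)$ entering through edge $j$ of $P$, that color $\pi(j)$ exits through edge $j$ of $Q$ for every $j$. The vertex rule at $(x,y)\in A^+$: for incoming colors $i<j$, if $j$ enters from the left and $i$ from below they go straight ($j$ right, $i$ up) with probability $p_{x,y}$ and turn otherwise; if $j$ enters from below and $i$ from the left they go straight with probability $q_{y-x}p_{x,y}$ and turn otherwise; the outcome at $(y,x)$ is the mirror image with all colors negated. *)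

theory Defs
  imports Main "HOL-Library.FuncSet"
begin

section \<open>The hyperoctahedral group B_n as signed permutations of +-[1,n]\<close>

definition pm_set :: "nat \<Rightarrow> int set" where
  "pm_set n = {-int n..int n} - {0}"

definition signed_perms :: "nat \<Rightarrow> (int \<Rightarrow> int) set" where
  "signed_perms n = {\<pi>. bij_betw \<pi> (pm_set n) (pm_set n) \<and> (\<forall>i. \<pi> (-i) = - \<pi> i)
                          \<and> (\<forall>i. i \<notin> pm_set n \<longrightarrow> \<pi> i = i)}"

text \<open>Coxeter generators: s_0 = (-1 1), s_k = (k k+1)(-k -k-1).\<close>
definition gen :: "nat \<Rightarrow> int \<Rightarrow> int" where
  "gen k i = (if k = 0 then (if i = 1 then -1 else if i = -1 then 1 else i)
              else (if i = int k then int k + 1 else if i = int k + 1 then int k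
                    else if i = - int k then - int k - 1 else if i = - int k - 1 then - int k
                    else i))"

text \<open>Coxeter length: minimal length of a word in s_0,...,s_(n-1); the group law is composition.\<close>
definition clen :: "nat \<Rightarrow> (int \<Rightarrow> int) \<Rightarrow> nat" where
  "clen n w = (LEAST m. \<exists>ks. length ks = m \<and> set ks \<subseteq> {0..<n}
                           \<and> w = foldr (\<lambda>k f. gen k \<circ> f) ks id)"

text \<open>An element h of the Hecke algebra is the coefficient function w |-> coefficient of T_w
  (supported on B_n). Tb w is the basis element T_w.\<close>
definition Tb :: "(int \<Rightarrow> int) \<Rightarrow> (int \<Rightarrow> int) \<Rightarrow> 'a::field" where
  "Tb w v = (if v = w then 1 else 0)"

definition qpar :: "'a::field \<Rightarrow> 'a \<Rightarrow> nat \<Rightarrow> 'a" where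
  "qpar q t k = (if k = 0 then t else q)"

text \<open>Right multiplication h |-> h T_k, determined by the defining relations:
  T_w T_k = T_(w s_k) if l(w s_k) > l(w), and = (1-q_k) T_w + q_k T_(w s_k) otherwise.\<close>
definition rmulT :: "nat \<Rightarrow> 'a::field \<Rightarrow> 'a \<Rightarrow> nat \<Rightarrow> ((int \<Rightarrow> int) \<Rightarrow> 'a) \<Rightarrow> ((int \<Rightarrow> int) \<Rightarrow> 'a)" where
  "rmulT n q t k h = (\<lambda>v. if clen n (v \<circ> gen k) < clen n v
                          then h (v \<circ> gen k) + (1 - qpar q t k) * h v
                          else qpar q t k * h (v \<circ> gen k))"

definition rmulR :: "nat \<Rightarrow> 'a::field \<Rightarrow> 'a \<Rightarrow> nat \<Rightarrow> 'a \<Rightarrow> ((int \<Rightarrow> int) \<Rightarrow> 'a) \<Rightarrow> ((int \<Rightarrow> int) \<Rightarrow> 'a)" where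
  "rmulR n q t k p h = (\<lambda>v. p * rmulT n q t k h v + (1 - p) * h v)"

definition pxy :: "'a::field \<Rightarrow> 'a \<Rightarrow> 'a \<Rightarrow> (int \<Rightarrow> 'a) \<Rightarrow> int \<Rightarrow> int \<Rightarrow> 'a" where
  "pxy q t \<nu> z x y = (if x = y then (z x ^ 2 - 1) / ((z x - \<nu> * t) * (z x + 1 / \<nu>))
                     else (z x * z y - 1) / (z x * z y - q))"

text \<open>Lattice edges, named by their head vertex: HE x y is the horizontal edge (x-1,y) -> (x,y),
  VE x y is the vertical edge (x,y-1) -> (x,y).\<close>
datatype edge = HE int int | VE int int

fun mir :: "edge \<Rightarrow> edge" where
  "mir (HE x y) = VE y x"
| "mir (VE x y) = HE y x"

text \<open>An up-left path on the dual lattice with 2n steps. A dual point (a,b) stands for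
  (a+1/2, b+1/2). The path starts at (a0, a0 - n) and its step list s has True = up, False = left.
  An up step from (a,b) crosses HE (a+1) (b+1); a left step from (a,b) crosses VE a (b+1).\<close>
definition cntL :: "bool list \<Rightarrow> nat \<Rightarrow> int" where
  "cntL s i = int (length (filter Not (take i s)))"
definition cntU :: "bool list \<Rightarrow> nat \<Rightarrow> int" where
  "cntU s i = int (length (filter id (take i s)))"

definition dual_a :: "int \<Rightarrow> bool list \<Rightarrow> nat \<Rightarrow> int" where
  "dual_a a0 s i = a0 - cntL s i"
definition dual_b :: "int \<Rightarrow> nat \<Rightarrow> bool list \<Rightarrow> nat \<Rightarrow> int" where
  "dual_b a0 n s i = a0 - int n + cntU s i"

definition step_edge :: "int \<Rightarrow> nat \<Rightarrow> bool list \<Rightarrow> nat \<Rightarrow> edge" where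
  "step_edge a0 n s i = (if s ! i then HE (dual_a a0 s i + 1) (dual_b a0 n s i + 1)
                         else VE (dual_a a0 s i) (dual_b a0 n s i + 1))"

text \<open>Labels -n,...,-1,1,...,n of the crossing edges in increasing order moving up-left.\<close>
definition label_idx :: "nat \<Rightarrow> int \<Rightarrow> nat" where
  "label_idx n j = (if j < 0 then nat (int n + j) else nat (int n + j - 1))"

definition path_edge :: "int \<Rightarrow> nat \<Rightarrow> bool list \<Rightarrow> int \<Rightarrow> edge" where
  "path_edge a0 n s j = step_edge a0 n s (label_idx n j)"

text \<open>Invariance of the path under (x,y) |-> (y,x).\<close>
definition sym_path :: "nat \<Rightarrow> bool list \<Rightarrow> bool" where
  "sym_path n s \<longleftrightarrow> length s = 2 * n \<and> (\<forall>i < 2 * n. s ! i = (\<not> s ! (2 * n - 1 - i)))"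

text \<open>P (southwest) and Q (northeast) have common endpoints and Q lies weakly northeast of P.\<close>
definition skew_domain :: "nat \<Rightarrow> bool list \<Rightarrow> bool list \<Rightarrow> bool" where
  "skew_domain n P Q \<longleftrightarrow> sym_path n P \<and> sym_path n Q \<and> (\<forall>i \<le> 2 * n. cntL Q i \<le> cntL P i)"

definition skew_dom :: "int \<Rightarrow> nat \<Rightarrow> bool list \<Rightarrow> bool list \<Rightarrow> (int \<times> int) set" where
  "skew_dom a0 n P Q = {(x, y). \<exists>i \<le> 2 * n. y - x = int i - int n
                          \<and> dual_a a0 P i < x \<and> x \<le> dual_a a0 Q i}"

definition domp :: "int \<Rightarrow> nat \<Rightarrow> bool list \<Rightarrow> bool list \<Rightarrow> (int \<times> int) set" where
  "domp a0 n P Q = {(x, y) \<in> skew_dom a0 n P Q. x \<le> y}"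

definition dom_edges :: "int \<Rightarrow> nat \<Rightarrow> bool list \<Rightarrow> bool list \<Rightarrow> edge set" where
  "dom_edges a0 n P Q =
     path_edge a0 n P ` pm_set n \<union> path_edge a0 n Q ` pm_set n
     \<union> {HE x y | x y. (x - 1, y) \<in> skew_dom a0 n P Q \<and> (x, y) \<in> skew_dom a0 n P Q}
     \<union> {VE x y | x y. (x, y - 1) \<in> skew_dom a0 n P Q \<and> (x, y) \<in> skew_dom a0 n P Q}"

definition vweight :: "'a::field \<Rightarrow> 'a \<Rightarrow> 'a \<Rightarrow> (int \<Rightarrow> 'a) \<Rightarrow> (edge \<Rightarrow> int) \<Rightarrow> int \<times> int \<Rightarrow> 'a" where
  "vweight q t \<nu> z c v = (case v of (x, y) \<Rightarrow>
     (let l = c (HE x y); b = c (VE x y); r = c (HE (x + 1) y); u = c (VE x (y + 1));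
          p = pxy q t \<nu> z x y; qk = qpar q t (nat (y - x)) in
      if l = b then 0
      else if b < l then
        (if r = l \<and> u = b then p else if r = b \<and> u = l then 1 - p else 0)
      else
        (if r = l \<and> u = b then qk * p else if r = b \<and> u = l then 1 - qk * p else 0)))"

text \<open>Probability P_A^(sigma,pi): sum over all colourings of the edges of the domain that are
  compatible with the symmetry (colour at mirrored edge is negated) and the boundary data,
  of the product of vertex weights over A^+ (the vertices in the lower half being forced).\<close>
definition Pprob :: "'a::field \<Rightarrow> 'a \<Rightarrow> 'a \<Rightarrow> (int \<Rightarrow> 'a) \<Rightarrow> int \<Rightarrow> nat \<Rightarrow> bool list \<Rightarrow> bool list
                     \<Rightarrow> (int \<Rightarrow> int) \<Rightarrow> (int \<Rightarrow> int) \<Rightarrow> 'a" where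
  "Pprob q t \<nu> z a0 n P Q \<sigma> \<pi> =
     (\<Sum>c \<in> {c \<in> Pi\<^sub>E (dom_edges a0 n P Q) (\<lambda>_. pm_set n).
               (\<forall>e \<in> dom_edges a0 n P Q. c (mir e) = - c e)
             \<and> (\<forall>j \<in> pm_set n. c (path_edge a0 n P j) = \<sigma> j \<and> c (path_edge a0 n Q j) = \<pi> j)}.
        \<Prod>v \<in> domp a0 n P Q. vweight q t \<nu> z c v)"

definition admissible_order :: "(int \<times> int) set \<Rightarrow> (int \<times> int) list \<Rightarrow> bool" where
  "admissible_order S L \<longleftrightarrow> distinct L \<and> set L = S \<and>
     (\<forall>i < length L. \<forall>j < length L. fst (L ! i) \<le> fst (L ! j) \<and> snd (L ! i) \<le> snd (L ! j) \<longrightarrow> i \<le> j)"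

text \<open>h * Y_A, where Y_A is the ordered product of R_(y-x)(p_(x,y)) along L.\<close>
definition mulY :: "nat \<Rightarrow> 'a::field \<Rightarrow> 'a \<Rightarrow> 'a \<Rightarrow> (int \<Rightarrow> 'a) \<Rightarrow> (int \<times> int) list
                    \<Rightarrow> ((int \<Rightarrow> int) \<Rightarrow> 'a) \<Rightarrow> ((int \<Rightarrow> int) \<Rightarrow> 'a)" where
  "mulY n q t \<nu> z L h = foldl (\<lambda>g (x, y). rmulR n q t (nat (y - x)) (pxy q t \<nu> z x y) g) h L"

end

theory Submission
  imports Defs
begin


lemma pm_iff: "a \<in> pm_set n \<longleftrightarrow> a \<noteq> 0 \<and> -int n \<le> a \<and> a \<le> int n"
  by (auto simp: pm_set_def)

lemma finite_pm[simp]: "finite (pm_set n)" by (simp add: pm_set_def)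

lemma SP_D:
  assumes "\<pi> \<in> signed_perms n"
  shows "bij_betw \<pi> (pm_set n) (pm_set n)" "\<And>i. \<pi> (-i) = - \<pi> i" "\<And>i. i \<notin> pm_set n \<Longrightarrow> \<pi> i = i"
  using assms by (auto simp: signed_perms_def)

lemma SP_in: "\<pi> \<in> signed_perms n \<Longrightarrow> a \<in> pm_set n \<Longrightarrow> \<pi> a \<in> pm_set n"
  using SP_D(1) bij_betwE by blast

lemma SP_inj: "\<pi> \<in> signed_perms n \<Longrightarrow> a \<in> pm_set n \<Longrightarrow> b \<in> pm_set n \<Longrightarrow> \<pi> a = \<pi> b \<Longrightarrow> a = b"
  using SP_D(1) bij_betw_imp_inj_on inj_on_def by metis

lemma SP_comp: "\<pi> \<in> signed_perms n \<Longrightarrow> \<rho> \<in> signed_perms n \<Longrightarrow> \<pi> \<circ> \<rho> \<in> signed_perms n"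
  unfolding signed_perms_def by (auto intro: bij_betw_trans)

lemma gen_SP: "k < n \<Longrightarrow> gen k \<in> signed_perms n"
proof -
  assume k: "k < n"
  have inv: "gen k (gen k i) = i" for i by (auto simp: gen_def)
  have m: "i \<in> pm_set n \<Longrightarrow> gen k i \<in> pm_set n" for i using k by (auto simp: gen_def pm_iff)
  have "bij_betw (gen k) (pm_set n) (pm_set n)"
    by (rule bij_betwI[where g="gen k"]) (auto simp: m inv)
  moreover have "gen k (-i) = - gen k i" for i by (auto simp: gen_def)
  moreover have "i \<notin> pm_set n \<Longrightarrow> gen k i = i" for i using k by (auto simp: gen_def pm_iff)
  ultimately show ?thesis by (auto simp: signed_perms_def)
qed

lemma gen_gen[simp]: "gen k (gen k i) = i" by (auto simp: gen_def)
lemma gen_o_gen[simp]: "\<pi> \<circ> gen k \<circ> gen k = \<pi>" by (auto simp: fun_eq_iff)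

definition lo :: "nat \<Rightarrow> int" where "lo k = (if k = 0 then -1 else int k)"
definition hi :: "nat \<Rightarrow> int" where "hi k = int k + 1"

lemma gen_lo[simp]: "gen k (lo k) = hi k" and gen_hi[simp]: "gen k (hi k) = lo k"
  by (auto simp: gen_def lo_def hi_def)

lemma SP_id: "id \<in> signed_perms n"
  by (auto simp: signed_perms_def)

definition Minv :: "nat \<Rightarrow> (int \<Rightarrow> int) \<Rightarrow> int" where
  "Minv n \<pi> = (\<Sum>a\<in>pm_set n. \<Sum>b\<in>pm_set n. if a < b \<and> \<pi> b < \<pi> a then 1 else 0)
             + (\<Sum>a\<in>{1..int n}. if \<pi> a < 0 then 1 else 0)"

lemma Minv_nonneg: "0 \<le> Minv n \<pi>"
  unfolding Minv_def by (intro add_nonneg_nonneg sum_nonneg) auto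

lemma Minv_id: "Minv n id = 0"
  unfolding Minv_def by (auto intro!: sum.neutral)

definition Sx :: "nat \<Rightarrow> (int \<times> int) set" where
  "Sx k = {(lo k, hi k), (hi k, lo k), (- hi k, - lo k), (- lo k, - hi k)}"

lemma gen_order: assumes "a \<noteq> 0" "b \<noteq> 0" "(a, b) \<notin> Sx k" shows "(gen k a < gen k b) = (a < b)"
proof (cases "k = 0")
  case True
  then show ?thesis using assms unfolding gen_def Sx_def lo_def hi_def by (simp split: if_splits) linarith+
next
  case False
  define K where "K = int k"
  have "K > 0" using False by (simp add: K_def)
  then show ?thesis using False assms unfolding gen_def Sx_def lo_def hi_def K_def[symmetric]
    by (simp split: if_splits) presburger
qed

lemma reindex_gen:
  assumes "k < n"
  shows "(\<Sum>a\<in>pm_set n. f (gen k a)) = (\<Sum>a\<in>pm_set n. (f a :: int))"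
proof -
  have "bij_betw (gen k) (pm_set n) (pm_set n)" using gen_SP[OF assms] SP_D(1) by blast
  then show ?thesis by (rule sum.reindex_bij_betw)
qed

lemma Nstep:
  assumes k: "k < n" and p: "\<pi> \<in> signed_perms n"
  shows "(\<Sum>a\<in>pm_set n. \<Sum>b\<in>pm_set n. if a < b \<and> (\<pi> \<circ> gen k) b < (\<pi> \<circ> gen k) a then 1 else 0)
       - (\<Sum>a\<in>pm_set n. \<Sum>b\<in>pm_set n. if a < b \<and> \<pi> b < \<pi> a then 1 else 0)
       = (\<Sum>ab\<in>Sx k. (if gen k (fst ab) < gen k (snd ab) then 1 else 0) * (if \<pi> (snd ab) < \<pi> (fst ab) then 1 else 0)
                     - (if fst ab < snd ab then 1 else 0) * (if \<pi> (snd ab) < \<pi> (fst ab) then 1 else (0::int)))"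
proof -
  define F where "F a b = (if gen k a < gen k b \<and> \<pi> b < \<pi> a then 1 else (0::int))" for a b
  have "(\<Sum>a\<in>pm_set n. \<Sum>b\<in>pm_set n. if a < b \<and> (\<pi> \<circ> gen k) b < (\<pi> \<circ> gen k) a then 1 else 0)
      = (\<Sum>a\<in>pm_set n. \<Sum>b\<in>pm_set n. F (gen k a) (gen k b))"
    by (simp add: F_def)
  also have "\<dots> = (\<Sum>a\<in>pm_set n. \<Sum>b\<in>pm_set n. F (gen k a) b)"
    by (intro sum.cong refl reindex_gen[OF k, where f="\<lambda>b. F _ b"])
  also have "\<dots> = (\<Sum>a\<in>pm_set n. \<Sum>b\<in>pm_set n. F a b)"
    by (rule reindex_gen[OF k, where f="\<lambda>a. \<Sum>b\<in>pm_set n. F a b"])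
  finally have 1: "(\<Sum>a\<in>pm_set n. \<Sum>b\<in>pm_set n. if a < b \<and> (\<pi> \<circ> gen k) b < (\<pi> \<circ> gen k) a then 1 else 0)
     = (\<Sum>a\<in>pm_set n. \<Sum>b\<in>pm_set n. F a b)" .
  define D where "D ab = (if gen k (fst ab) < gen k (snd ab) then 1 else 0) * (if \<pi> (snd ab) < \<pi> (fst ab) then 1 else 0)
                     - (if fst ab < snd ab then 1 else 0) * (if \<pi> (snd ab) < \<pi> (fst ab) then 1 else (0::int))" for ab
  have "(\<Sum>a\<in>pm_set n. \<Sum>b\<in>pm_set n. F a b) - (\<Sum>a\<in>pm_set n. \<Sum>b\<in>pm_set n. if a < b \<and> \<pi> b < \<pi> a then 1 else 0)
     = (\<Sum>a\<in>pm_set n. \<Sum>b\<in>pm_set n. D (a, b))"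
    unfolding sum_subtractf[symmetric] by (intro sum.cong refl) (simp add: F_def D_def)
  also have "\<dots> = (\<Sum>ab\<in>pm_set n \<times> pm_set n. D ab)"
    by (simp add: sum.cartesian_product)
  also have "\<dots> = (\<Sum>ab\<in>Sx k. D ab)"
  proof (rule sum.mono_neutral_right)
    show "Sx k \<subseteq> pm_set n \<times> pm_set n" using k by (auto simp: Sx_def lo_def hi_def pm_iff)
    show "\<forall>ab\<in>pm_set n \<times> pm_set n - Sx k. D ab = 0"
      using gen_order by (auto simp: D_def pm_iff)
  qed simp
  finally show ?thesis using 1 by (simp add: D_def)
qed

lemma lo_hi_pm: "k < n \<Longrightarrow> lo k \<in> pm_set n \<and> hi k \<in> pm_set n"
  by (auto simp: lo_def hi_def pm_iff)

lemma lo_ne_hi[simp]: "lo k \<noteq> hi k" by (auto simp: lo_def hi_def)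

lemma pi_lo_ne_hi: "\<pi> \<in> signed_perms n \<Longrightarrow> k < n \<Longrightarrow> \<pi> (lo k) \<noteq> \<pi> (hi k)"
  using SP_inj lo_hi_pm lo_ne_hi by metis

lemma Sx_sum:
  assumes k: "k < n" and p: "\<pi> \<in> signed_perms n"
  shows "(\<Sum>ab\<in>Sx k. (if gen k (fst ab) < gen k (snd ab) then 1 else 0) * (if \<pi> (snd ab) < \<pi> (fst ab) then 1 else 0)
                     - (if fst ab < snd ab then 1 else 0) * (if \<pi> (snd ab) < \<pi> (fst ab) then 1 else (0::int)))
    = (if k = 0 then 1 else 2) * ((if \<pi> (lo k) < \<pi> (hi k) then 1 else 0) - (if \<pi> (hi k) < \<pi> (lo k) then 1 else 0))"
proof (cases "k = 0")
  case True
  have "Sx k = {(-1, 1), (1, -1)}" using True by (auto simp: Sx_def lo_def hi_def)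
  then show ?thesis using True by (simp add: gen_def lo_def hi_def)
next
  case False
  have neg: "\<pi> (- i) = - \<pi> i" for i using SP_D(2)[OF p] .
  have "Sx k = {(int k, int k + 1), (int k + 1, int k), (- int k - 1, - int k), (- int k, - int k - 1)}"
    using False by (auto simp: Sx_def lo_def hi_def)
  moreover have "\<pi> (- int k - 1) = - \<pi> (int k + 1)" using neg[of "int k + 1"] by simp
  ultimately show ?thesis using False by (simp add: gen_def lo_def hi_def neg)
qed

lemma neg_step:
  assumes k: "k < n" and p: "\<pi> \<in> signed_perms n"
  shows "(\<Sum>a\<in>{1..int n}. if (\<pi> \<circ> gen k) a < 0 then 1 else 0) - (\<Sum>a\<in>{1..int n}. if \<pi> a < 0 then 1 else (0::int))
    = (if k = 0 then (if \<pi> (-1) < 0 then 1 else 0) - (if \<pi> 1 < 0 then 1 else 0) else 0)"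
proof (cases "k = 0")
  case True
  have e: "{1..int n} = insert 1 {2..int n}" using k by auto
  have "(\<Sum>a\<in>{2..int n}. if (\<pi> \<circ> gen k) a < 0 then 1 else 0) = (\<Sum>a\<in>{2..int n}. if \<pi> a < 0 then 1 else (0::int))"
    using True by (intro sum.cong refl) (auto simp: gen_def)
  then show ?thesis using True unfolding e by (simp add: gen_def)
next
  case False
  have "bij_betw (gen k) {1..int n} {1..int n}"
  proof (rule bij_betwI[where g="gen k"])
    show "gen k \<in> {1..int n} \<rightarrow> {1..int n}" using False k by (auto simp: gen_def)
  qed (use False k in \<open>auto simp: gen_def\<close>)
  then have "(\<Sum>a\<in>{1..int n}. if \<pi> (gen k a) < 0 then 1 else 0) = (\<Sum>a\<in>{1..int n}. if \<pi> a < 0 then 1 else (0::int))"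
    by (rule sum.reindex_bij_betw)
  then show ?thesis using False by simp
qed

lemma Minv_step:
  assumes k: "k < n" and p: "\<pi> \<in> signed_perms n"
  shows "Minv n (\<pi> \<circ> gen k) = Minv n \<pi> + (if \<pi> (lo k) < \<pi> (hi k) then 2 else -2)"
proof -
  have ne: "\<pi> (lo k) \<noteq> \<pi> (hi k)" using pi_lo_ne_hi[OF p k] .
  have neg: "\<pi> (- i) = - \<pi> i" for i using SP_D(2)[OF p] .
  have "Minv n (\<pi> \<circ> gen k) - Minv n \<pi> = (if k = 0 then 1 else 2) * ((if \<pi> (lo k) < \<pi> (hi k) then 1 else 0) - (if \<pi> (hi k) < \<pi> (lo k) then 1 else 0))
     + (if k = 0 then (if \<pi> (-1) < 0 then 1 else 0) - (if \<pi> 1 < 0 then 1 else 0) else 0)"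
    using Nstep[OF k p] Sx_sum[OF k p] neg_step[OF k p] unfolding Minv_def by linarith
  moreover have "\<pi> 1 \<noteq> 0" using SP_in[OF p, of 1] k by (auto simp: pm_iff)
  ultimately show ?thesis using ne neg[of 1] by (cases "k = 0") (auto simp: lo_def hi_def split: if_splits)
qed

lemma no_descent_id:
  assumes p: "\<pi> \<in> signed_perms n" and nd: "\<forall>k<n. \<pi> (lo k) < \<pi> (hi k)"
  shows "\<pi> = id"
proof -
  have neg: "\<pi> (- i) = - \<pi> i" for i using SP_D(2)[OF p] .
  have up: "1 \<le> j \<Longrightarrow> j \<le> n \<Longrightarrow> int j \<le> \<pi> (int j)" for j
  proof (induction j)
    case 0 then show ?case by simp
  next
    case (Suc j)
    show ?case
    proof (cases "j = 0")
      case True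
      have "\<pi> (-1) < \<pi> 1" using nd Suc.prems by (auto simp: lo_def hi_def)
      then show ?thesis using True neg[of 1] by simp
    next
      case False
      have "\<pi> (int j) < \<pi> (int j + 1)" using nd[rule_format, of j] Suc.prems False by (auto simp: lo_def hi_def)
      then show ?thesis using Suc False by (simp add: add.commute)
    qed
  qed
  have down: "m < n \<Longrightarrow> \<pi> (int (n - m)) \<le> int (n - m)" for m
  proof (induction m)
    case 0
    have "\<pi> (int n) \<in> pm_set n" using SP_in[OF p] 0 by (auto simp: pm_iff)
    then show ?case by (simp add: pm_iff)
  next
    case (Suc m)
    have "\<pi> (int (n - Suc m)) < \<pi> (int (n - Suc m) + 1)"
      using nd[rule_format, of "n - Suc m"] Suc.prems by (auto simp: lo_def hi_def)
    moreover have "int (n - Suc m) + 1 = int (n - m)" using Suc.prems by simp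
    ultimately show ?case using Suc by simp
  qed
  have pos: "1 \<le> i \<Longrightarrow> i \<le> int n \<Longrightarrow> \<pi> i = i" for i
  proof -
    assume a: "1 \<le> i" "i \<le> int n"
    obtain j where j: "i = int j" using a by (metis int_nat_eq le_numeral_extra(1) order.trans zero_le_one) 
    have "int j \<le> \<pi> (int j)" using up[of j] a j by simp
    moreover have "\<pi> (int (n - (n - j))) \<le> int (n - (n - j))" using down[of "n - j"] a j by simp
    moreover have "n - (n - j) = j" using a j by simp
    ultimately show ?thesis using j by simp
  qed
  show ?thesis
  proof
    fix i
    show "\<pi> i = id i"
    proof (cases "i \<in> pm_set n")
      case True
      then show ?thesis
      proof (cases "i > 0")
        case True then show ?thesis using pos \<open>i \<in> pm_set n\<close> by (simp add: pm_iff)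
      next
        case False
        then have "\<pi> (- i) = - i" using pos \<open>i \<in> pm_set n\<close> by (simp add: pm_iff)
        then show ?thesis using neg[of i] by simp
      qed
    next
      case False then show ?thesis using SP_D(3)[OF p] by simp
    qed
  qed
qed

definition Wd :: "nat list \<Rightarrow> int \<Rightarrow> int" where
  "Wd ks = foldr (\<lambda>k f. gen k \<circ> f) ks id"

lemma foldr_gen_comp: "foldr (\<lambda>k f. gen k \<circ> f) ks h = foldr (\<lambda>k f. gen k \<circ> f) ks id \<circ> h"
  by (induction ks) (auto simp: o_assoc)

lemma Wd_snoc: "Wd (ks @ [k]) = Wd ks \<circ> gen k"
  unfolding Wd_def using foldr_gen_comp[of ks "gen k \<circ> id"] by simp

lemma Wd_SP: "set ks \<subseteq> {0..<n} \<Longrightarrow> Wd ks \<in> signed_perms n"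
proof (induction ks rule: rev_induct)
  case Nil then show ?case using SP_id by (simp add: Wd_def id_def)
next
  case (snoc k ks) then show ?case unfolding Wd_snoc by (intro SP_comp gen_SP) auto
qed

lemma Wd_Minv: "set ks \<subseteq> {0..<n} \<Longrightarrow> Minv n (Wd ks) \<le> 2 * int (length ks)"
proof (induction ks rule: rev_induct)
  case Nil then show ?case using Minv_id by (simp add: Wd_def id_def)
next
  case (snoc k ks)
  then have "Minv n (Wd ks \<circ> gen k) \<le> Minv n (Wd ks) + 2"
    using Minv_step[of k n "Wd ks"] Wd_SP[of ks n] by auto
  then show ?case using snoc unfolding Wd_snoc by (simp del: o_apply add: comp_def[symmetric])
qed

lemma exists_word:
  "\<pi> \<in> signed_perms n \<Longrightarrow> \<exists>ks. set ks \<subseteq> {0..<n} \<and> Wd ks = \<pi> \<and> 2 * int (length ks) = Minv n \<pi>"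
proof (induction "nat (Minv n \<pi>)" arbitrary: \<pi> rule: less_induct)
  case less
  show ?case
  proof (cases "\<forall>k<n. \<pi> (lo k) < \<pi> (hi k)")
    case True
    then have "\<pi> = id" using no_descent_id less.prems by blast
    then show ?thesis by (intro exI[of _ "[]"]) (simp add: Wd_def Minv_id)
  next
    case False
    then obtain k where k: "k < n" "\<not> \<pi> (lo k) < \<pi> (hi k)" by blast
    have m: "Minv n (\<pi> \<circ> gen k) = Minv n \<pi> - 2" using Minv_step[OF k(1) less.prems] k by simp
    have sp: "\<pi> \<circ> gen k \<in> signed_perms n" using less.prems gen_SP k SP_comp by blast
    have "nat (Minv n (\<pi> \<circ> gen k)) < nat (Minv n \<pi>)" using m Minv_nonneg[of n "\<pi> \<circ> gen k"] by simp
    from less.hyps[OF this sp] obtain ks where ks: "set ks \<subseteq> {0..<n}" "Wd ks = \<pi> \<circ> gen k"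
      "2 * int (length ks) = Minv n (\<pi> \<circ> gen k)" by blast
    show ?thesis
      by (intro exI[of _ "ks @ [k]"]) (use ks k m in \<open>auto simp: Wd_snoc\<close>)
  qed
qed

lemma clen_Minv:
  assumes p: "\<pi> \<in> signed_perms n"
  shows "2 * int (clen n \<pi>) = Minv n \<pi>"
proof -
  obtain ks where ks: "set ks \<subseteq> {0..<n}" "Wd ks = \<pi>" "2 * int (length ks) = Minv n \<pi>"
    using exists_word[OF p] by blast
  have "clen n \<pi> = length ks"
    unfolding clen_def
  proof (rule Least_equality)
    show "\<exists>ks'. length ks' = length ks \<and> set ks' \<subseteq> {0..<n} \<and> \<pi> = foldr (\<lambda>k f. gen k \<circ> f) ks' id"
      using ks by (auto simp: Wd_def)
    fix m assume "\<exists>ks'. length ks' = m \<and> set ks' \<subseteq> {0..<n} \<and> \<pi> = foldr (\<lambda>k f. gen k \<circ> f) ks' id"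
    then obtain ks' where "length ks' = m" "set ks' \<subseteq> {0..<n}" "\<pi> = Wd ks'" by (auto simp: Wd_def)
    then show "length ks \<le> m" using Wd_Minv[of ks' n] ks by simp
  qed
  then show ?thesis using ks by simp
qed

lemma descent:
  assumes p: "\<pi> \<in> signed_perms n" and k: "k < n"
  shows "clen n (\<pi> \<circ> gen k) < clen n \<pi> \<longleftrightarrow> \<pi> (hi k) < \<pi> (lo k)"
proof -
  have sp: "\<pi> \<circ> gen k \<in> signed_perms n" using p gen_SP k SP_comp by blast
  show ?thesis using clen_Minv[OF p] clen_Minv[OF sp] Minv_step[OF k p] pi_lo_ne_hi[OF p k]
    by (auto split: if_splits)
qed




definition Vw :: "'a::field \<Rightarrow> 'a \<Rightarrow> int \<Rightarrow> int \<Rightarrow> int \<Rightarrow> int \<Rightarrow> 'a" where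
  "Vw p qk l b r u = (if l = b then 0 else if b < l then
        (if r = l \<and> u = b then p else if r = b \<and> u = l then 1 - p else 0)
      else (if r = l \<and> u = b then qk * p else if r = b \<and> u = l then 1 - qk * p else 0))"

definition Wt :: "nat \<Rightarrow> 'a::field \<Rightarrow> 'a \<Rightarrow> (int \<Rightarrow> int) \<Rightarrow> (int \<Rightarrow> int) \<Rightarrow> 'a" where
  "Wt k p qk \<pi>' \<pi> = (if (\<forall>j. j \<notin> {lo k, hi k, - lo k, - hi k} \<longrightarrow> \<pi>' j = \<pi> j)
      then Vw p qk (\<pi>' (hi k)) (\<pi>' (lo k)) (\<pi> (lo k)) (\<pi> (hi k)) else 0)"

lemma gen_neg: "gen k (- i) = - gen k i" by (auto simp: gen_def)

lemma gen_other: "j \<notin> {lo k, hi k, - lo k, - hi k} \<Longrightarrow> gen k j = j"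
  by (cases "k = 0") (auto simp: gen_def lo_def hi_def)

lemma rmulR_Tb:
  "rmulR n q t k p (Tb \<pi>') \<pi> = p * (if clen n (\<pi> \<circ> gen k) < clen n \<pi>
        then Tb \<pi>' (\<pi> \<circ> gen k) + (1 - qpar q t k) * Tb \<pi>' \<pi> else qpar q t k * Tb \<pi>' (\<pi> \<circ> gen k))
     + (1 - p) * Tb \<pi>' \<pi>"
  by (simp add: rmulR_def rmulT_def)

lemma H_local:
  assumes p1: "\<pi> \<in> signed_perms n" and p2: "\<pi>' \<in> signed_perms n" and k: "k < n"
  shows "rmulR n q t k p (Tb \<pi>') \<pi> = Wt k p (qpar q t k) \<pi>' \<pi>"
proof -
  have neg: "\<pi> (- i) = - \<pi> i" for i using SP_D(2)[OF p1] .
  have neg': "\<pi>' (- i) = - \<pi>' i" for i using SP_D(2)[OF p2] .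
  have ne: "\<pi> (lo k) \<noteq> \<pi> (hi k)" using pi_lo_ne_hi[OF p1 k] .
  have ng: "\<pi> \<circ> gen k \<noteq> \<pi>"
  proof
    assume "\<pi> \<circ> gen k = \<pi>"
    then have "\<pi> (gen k (lo k)) = \<pi> (lo k)" by (metis o_apply)
    then show False using ne by simp
  qed
  have ds: "clen n (\<pi> \<circ> gen k) < clen n \<pi> \<longleftrightarrow> \<pi> (hi k) < \<pi> (lo k)" using descent[OF p1 k] .
  define qk where "qk = qpar q t k"
  define c where "c = (clen n (\<pi> \<circ> gen k) < clen n \<pi>)"
  have R: "rmulR n q t k p (Tb \<pi>') \<pi> = p * (if c then Tb \<pi>' (\<pi> \<circ> gen k) + (1 - qk) * Tb \<pi>' \<pi> else qk * Tb \<pi>' (\<pi> \<circ> gen k))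
     + (1 - p) * Tb \<pi>' \<pi>" unfolding c_def qk_def by (rule rmulR_Tb)
  show ?thesis
  proof (cases "\<pi>' = \<pi>")
    case True
    have t1: "Tb \<pi>' (\<pi> \<circ> gen k) = (0::'a)" "Tb \<pi>' \<pi> = (1::'a)" using True ng by (auto simp: Tb_def)
    have "Wt k p qk \<pi>' \<pi> = (if \<pi> (lo k) < \<pi> (hi k) then 1 - p else 1 - qk * p)"
      using True ne by (simp add: Wt_def Vw_def)
    moreover have "c \<longleftrightarrow> \<not> \<pi> (lo k) < \<pi> (hi k)" using ds ne unfolding c_def by auto
    ultimately show ?thesis unfolding R t1 qk_def[symmetric] by (simp add: algebra_simps)
  next
    case False
    note F1 = False
    show ?thesis
    proof (cases "\<pi>' = \<pi> \<circ> gen k")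
      case True
      have t1: "Tb \<pi>' (\<pi> \<circ> gen k) = (1::'a)" "Tb \<pi>' \<pi> = (0::'a)" using True F1 by (auto simp: Tb_def)
      have agree: "\<forall>j. j \<notin> {lo k, hi k, - lo k, - hi k} \<longrightarrow> \<pi>' j = \<pi> j" using True gen_other by auto
      have v1: "\<pi>' (hi k) = \<pi> (lo k)" "\<pi>' (lo k) = \<pi> (hi k)" using True by auto
      have "Wt k p qk \<pi>' \<pi> = (if \<pi> (hi k) < \<pi> (lo k) then p else qk * p)"
        using agree ne unfolding Wt_def Vw_def v1 by simp
      moreover have "c \<longleftrightarrow> \<pi> (hi k) < \<pi> (lo k)" using ds unfolding c_def by auto
      ultimately show ?thesis unfolding R t1 qk_def[symmetric] by simp
    next
      case False
      have t1: "Tb \<pi>' (\<pi> \<circ> gen k) = (0::'a)" "Tb \<pi>' \<pi> = (0::'a)" using False F1 by (auto simp: Tb_def)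
      have "Wt k p qk \<pi>' \<pi> = 0"
      proof (rule ccontr)
        assume nz: "Wt k p qk \<pi>' \<pi> \<noteq> 0"
        show False
        proof (cases "\<forall>j. j \<notin> {lo k, hi k, - lo k, - hi k} \<longrightarrow> \<pi>' j = \<pi> j")
          case False
          then have "Wt k p qk \<pi>' \<pi> = 0" unfolding Wt_def by (simp only: if_False)
          then show False using nz by simp
        next
          case True
          note agree = True
        then have vnz: "Vw p qk (\<pi>' (hi k)) (\<pi>' (lo k)) (\<pi> (lo k)) (\<pi> (hi k)) \<noteq> 0" using nz unfolding Wt_def by simp
        have "(\<pi> (lo k) = \<pi>' (hi k) \<and> \<pi> (hi k) = \<pi>' (lo k)) \<or> (\<pi> (lo k) = \<pi>' (lo k) \<and> \<pi> (hi k) = \<pi>' (hi k))"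
        proof (rule ccontr)
          assume "\<not> ?thesis"
          then have n1: "\<not> (\<pi> (lo k) = \<pi>' (hi k) \<and> \<pi> (hi k) = \<pi>' (lo k))"
            and n2: "\<not> (\<pi> (lo k) = \<pi>' (lo k) \<and> \<pi> (hi k) = \<pi>' (hi k))" by blast+
          have "Vw p qk (\<pi>' (hi k)) (\<pi>' (lo k)) (\<pi> (lo k)) (\<pi> (hi k)) = 0"
            unfolding Vw_def by (simp only: n1 n2 if_False if_cancel)
          then show False using vnz by simp
        qed
        then show False
        proof
          assume a: "\<pi> (lo k) = \<pi>' (hi k) \<and> \<pi> (hi k) = \<pi>' (lo k)"
          have "\<pi>' = \<pi> \<circ> gen k"
          proof
            fix j
            show "\<pi>' j = (\<pi> \<circ> gen k) j"
            proof (cases "j \<in> {lo k, hi k, - lo k, - hi k}")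
              case True
              then have "j = lo k \<or> j = hi k \<or> j = - lo k \<or> j = - hi k" by simp
              then show ?thesis
              proof (elim disjE)
                assume "j = lo k" then show ?thesis using a by simp
              next
                assume "j = hi k" then show ?thesis using a by simp
              next
                assume "j = - lo k" then show ?thesis using a neg[of "hi k"] neg'[of "lo k"] gen_neg[of k "lo k"] by simp
              next
                assume "j = - hi k" then show ?thesis using a neg[of "lo k"] neg'[of "hi k"] gen_neg[of k "hi k"] by simp
              qed
            next
              case False
              then show ?thesis using agree gen_other[OF False] by simp
            qed
          qed
          then show False using \<open>\<not> \<pi>' = \<pi> \<circ> gen k\<close> by simp
        next
          assume a: "\<pi> (lo k) = \<pi>' (lo k) \<and> \<pi> (hi k) = \<pi>' (hi k)"
          have "\<pi>' = \<pi>"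
          proof
            fix j
            show "\<pi>' j = \<pi> j"
            proof (cases "j \<in> {lo k, hi k, - lo k, - hi k}")
              case True
              then have "j = lo k \<or> j = hi k \<or> j = - lo k \<or> j = - hi k" by simp
              then show ?thesis
              proof (elim disjE)
                assume "j = lo k" then show ?thesis using a by simp
              next
                assume "j = hi k" then show ?thesis using a by simp
              next
                assume "j = - lo k" then show ?thesis using a neg[of "lo k"] neg'[of "lo k"] by simp
              next
                assume "j = - hi k" then show ?thesis using a neg[of "hi k"] neg'[of "hi k"] by simp
              qed
            next
              case False
              then show ?thesis using agree by simp
            qed
          qed
          then show False using F1 by simp
        qed
        qed
      qed
      then show ?thesis unfolding R t1 qk_def[symmetric] by simp
    qed
  qed
qed




lemma cntL_0[simp]: "cntL R 0 = 0" by (simp add: cntL_def)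

lemma cntL_Suc: "i < length R \<Longrightarrow> cntL R (Suc i) = cntL R i + (if R ! i then 0 else 1)"
  by (simp add: cntL_def take_Suc_conv_app_nth)

lemma cntU_Suc: "i < length R \<Longrightarrow> cntU R (Suc i) = cntU R i + (if R ! i then 1 else 0)"
  by (simp add: cntU_def take_Suc_conv_app_nth)

lemma cntU_eq: "i \<le> length R \<Longrightarrow> cntU R i = int i - cntL R i"
proof (induction i)
  case 0 then show ?case by (simp add: cntU_def)
next
  case (Suc i) then show ?case using cntL_Suc[of i R] cntU_Suc[of i R] by simp
qed

lemma cntL_mono1: "i < length R \<Longrightarrow> cntL R i \<le> cntL R (Suc i) \<and> cntL R (Suc i) \<le> cntL R i + 1"
  using cntL_Suc[of i R] by simp

lemma step_edge_eq: "i < length R \<Longrightarrow> step_edge a0 n R i =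
   (if R ! i then HE (dual_a a0 R i + 1) (dual_a a0 R i + int i - int n + 1)
    else VE (dual_a a0 R i) (dual_a a0 R i + int i - int n + 1))"
  using cntU_eq[of i R] by (simp add: step_edge_def dual_a_def dual_b_def)

lemma step_inv_HE: "i < length R \<Longrightarrow> step_edge a0 n R i = HE a b \<Longrightarrow>
    R ! i \<and> dual_a a0 R i = a - 1 \<and> int i = b - a + int n"
  by (simp add: step_edge_eq split: if_splits)

lemma step_inv_VE: "i < length R \<Longrightarrow> step_edge a0 n R i = VE a b \<Longrightarrow>
    \<not> R ! i \<and> dual_a a0 R i = a \<and> int i = b - a + int n - 1"
  by (simp add: step_edge_eq split: if_splits)

lemma step_edge_inj: "i < length R \<Longrightarrow> j < length R \<Longrightarrow> step_edge a0 n R i = step_edge a0 n R j \<Longrightarrow> i = j"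
  by (auto simp: step_edge_eq split: if_splits)

lemma sym_len: "sym_path n R \<Longrightarrow> length R = 2 * n" by (simp add: sym_path_def)

lemma sym_nth: "sym_path n R \<Longrightarrow> i < 2 * n \<Longrightarrow> R ! (2 * n - 1 - i) = (\<not> R ! i)"
  unfolding sym_path_def by blast

lemma sym_cnt:
  assumes s: "sym_path n R" and i: "i \<le> 2 * n"
  shows "cntL R (2 * n - i) = int n - int i + cntL R i"
proof -
  have len: "length R = 2 * n" using s by (simp add: sym_path_def)
  define g where "g m = cntL R (2 * n - m) - cntL R m + int m" for m
  have step: "g (Suc m) = g m" if "m < 2 * n" for m
  proof -
    have a: "cntL R (Suc m) = cntL R m + (if R ! m then 0 else 1)" using cntL_Suc[of m R] that len by simp
    have e: "2 * n - m = Suc (2 * n - Suc m)" using that by simp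
    have b: "cntL R (2 * n - m) = cntL R (2 * n - Suc m) + (if R ! (2 * n - Suc m) then 0 else 1)"
      unfolding e using cntL_Suc[of "2 * n - Suc m" R] that len by simp
    have c: "R ! (2 * n - Suc m) = (\<not> R ! m)"
      using sym_nth[OF s that] by simp
    show ?thesis unfolding g_def using a b c by simp
  qed
  have all: "m \<le> 2 * n \<Longrightarrow> g m = g 0" for m
  proof (induction m)
    case 0 then show ?case by simp
  next
    case (Suc m) then show ?case using step[of m] by simp
  qed
  have "g n = int n" by (simp add: g_def)
  then have "g 0 = int n" using all[of n] by simp
  then have "g i = int n" using all[OF i] by simp
  then show ?thesis unfolding g_def by simp
qed

lemma sym_cnt_full: "sym_path n R \<Longrightarrow> cntL R (2 * n) = int n"
  using sym_cnt[of n R 0] by simp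

lemma mir_mir[simp]: "mir (mir e) = e" by (cases e) auto

lemma mir_step:
  assumes s: "sym_path n R" and i: "i < 2 * n"
  shows "mir (step_edge a0 n R i) = step_edge a0 n R (2 * n - 1 - i)"
proof -
  have len: "length R = 2 * n" using s by (simp add: sym_path_def)
  have c1: "cntL R (2 * n - Suc i) = int n - int (Suc i) + cntL R (Suc i)" using sym_cnt[OF s, of "Suc i"] i by simp
  have c2: "cntL R (Suc i) = cntL R i + (if R ! i then 0 else 1)" using cntL_Suc[of i R] len i by simp
  have r: "R ! (2 * n - 1 - i) = (\<not> R ! i)" using sym_nth[OF s i] .
  have j: "2 * n - 1 - i < length R" using len i by simp
  have ij: "int (2 * n - Suc i) = 2 * int n - 1 - int i" using i by simp
  show ?thesis
  proof (cases "R ! i")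
    case True
    then have c3: "cntL R (2 * n - Suc i) = int n - int (Suc i) + cntL R i" using c1 c2 by simp
    have e: "2 * n - 1 - i = 2 * n - Suc i" by simp
    show ?thesis using True r
      unfolding step_edge_eq[OF j] step_edge_eq[of i R, unfolded len, OF i] 
      by (simp add: dual_a_def e c3 ij)
  next
    case False
    then have c3: "cntL R (2 * n - Suc i) = int n - int (Suc i) + cntL R i + 1" using c1 c2 by simp
    have e: "2 * n - 1 - i = 2 * n - Suc i" by simp
    show ?thesis using False r
      unfolding step_edge_eq[OF j] step_edge_eq[of i R, unfolded len, OF i] 
      by (simp add: dual_a_def e c3 ij)
  qed
qed

lemma label_lt: "j \<in> pm_set n \<Longrightarrow> label_idx n j < 2 * n"
  by (auto simp: label_idx_def pm_iff)

lemma label_neg: "j \<in> pm_set n \<Longrightarrow> label_idx n (- j) = 2 * n - 1 - label_idx n j"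
  by (auto simp: label_idx_def pm_iff nat_diff_distrib)

lemma label_inj: "j1 \<in> pm_set n \<Longrightarrow> j2 \<in> pm_set n \<Longrightarrow> label_idx n j1 = label_idx n j2 \<Longrightarrow> j1 = j2"
  by (auto simp: label_idx_def pm_iff split: if_splits)

lemma mir_path_edge: "sym_path n R \<Longrightarrow> j \<in> pm_set n \<Longrightarrow> mir (path_edge a0 n R j) = path_edge a0 n R (- j)"
  unfolding path_edge_def using mir_step label_lt label_neg by simp

lemma path_edge_inj: "sym_path n R \<Longrightarrow> j1 \<in> pm_set n \<Longrightarrow> j2 \<in> pm_set n \<Longrightarrow>
   path_edge a0 n R j1 = path_edge a0 n R j2 \<Longrightarrow> j1 = j2"
proof -
  assume a: "sym_path n R" "j1 \<in> pm_set n" "j2 \<in> pm_set n" "path_edge a0 n R j1 = path_edge a0 n R j2"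
  have "label_idx n j1 = label_idx n j2"
    using step_edge_inj[of "label_idx n j1" R "label_idx n j2"] label_lt[OF a(2)] label_lt[OF a(3)] sym_len[OF a(1)] a(4)
    unfolding path_edge_def by simp
  then show ?thesis using label_inj a by blast
qed

lemma skew_dom_iff: "(x, y) \<in> skew_dom a0 n P Q \<longleftrightarrow>
   (- int n \<le> y - x \<and> y - x \<le> int n \<and> dual_a a0 P (nat (y - x + int n)) < x \<and> x \<le> dual_a a0 Q (nat (y - x + int n)))"
proof
  assume "(x, y) \<in> skew_dom a0 n P Q"
  then obtain i where i: "i \<le> 2 * n" "y - x = int i - int n" "dual_a a0 P i < x" "x \<le> dual_a a0 Q i"
    by (auto simp: skew_dom_def)
  then have "nat (y - x + int n) = i" by simp
  then show "- int n \<le> y - x \<and> y - x \<le> int n \<and> dual_a a0 P (nat (y - x + int n)) < x \<and> x \<le> dual_a a0 Q (nat (y - x + int n))"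
    using i by simp
next
  assume a: "- int n \<le> y - x \<and> y - x \<le> int n \<and> dual_a a0 P (nat (y - x + int n)) < x \<and> x \<le> dual_a a0 Q (nat (y - x + int n))"
  show "(x, y) \<in> skew_dom a0 n P Q"
    unfolding skew_dom_def
    by (rule CollectI, unfold case_prod_conv, rule exI[of _ "nat (y - x + int n)"]) (use a in auto)
qed

lemma dual_a_sym: "sym_path n R \<Longrightarrow> m \<le> 2 * n \<Longrightarrow> dual_a a0 R (2 * n - m) = dual_a a0 R m + int m - int n"
  using sym_cnt[of n R m] by (simp add: dual_a_def)

lemma skew_dom_sym:
  assumes d: "skew_domain n P Q" and xy: "(x, y) \<in> skew_dom a0 n P Q"
  shows "(y, x) \<in> skew_dom a0 n P Q"
proof -
  have sP: "sym_path n P" and sQ: "sym_path n Q" using d by (auto simp: skew_domain_def)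
  define m where "m = nat (y - x + int n)"
  have h: "- int n \<le> y - x" "y - x \<le> int n" "dual_a a0 P m < x" "x \<le> dual_a a0 Q m"
    using xy unfolding skew_dom_iff m_def by auto
  have m2: "m \<le> 2 * n" "int m = y - x + int n" using h(1,2) by (auto simp: m_def)
  have e: "nat (x - y + int n) = 2 * n - m" using m2 by simp
  show ?thesis unfolding skew_dom_iff e
    using h m2 dual_a_sym[OF sP m2(1), of a0] dual_a_sym[OF sQ m2(1), of a0] by simp
qed

lemma cntL_le: "0 \<le> cntL R i \<and> cntL R i \<le> int i"
  unfolding cntL_def by (simp add: le_trans[OF length_filter_le])

lemma skew_dom_finite: "finite (skew_dom a0 n P Q)"
proof -
  have "skew_dom a0 n P Q \<subseteq> {a0 - 2 * int n .. a0} \<times> {a0 - 3 * int n .. a0 + int n}"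
  proof
    fix xy assume "xy \<in> skew_dom a0 n P Q"
    then obtain x y where xy: "xy = (x, y)" "(x, y) \<in> skew_dom a0 n P Q" by (cases xy) auto
    then obtain i where i: "i \<le> 2 * n" "y - x = int i - int n" "dual_a a0 P i < x" "x \<le> dual_a a0 Q i"
      by (auto simp: skew_dom_def)
    have "0 \<le> cntL Q i" "cntL P i \<le> int i" using cntL_le by auto
    then show "xy \<in> {a0 - 2 * int n .. a0} \<times> {a0 - 3 * int n .. a0 + int n}"
      using i xy by (auto simp: dual_a_def)
  qed
  then show ?thesis by (rule finite_subset) simp
qed

lemma dom_edges_finite: "finite (dom_edges a0 n P Q)"
proof -
  have "{HE x y | x y. (x - 1, y) \<in> skew_dom a0 n P Q \<and> (x, y) \<in> skew_dom a0 n P Q}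
      \<subseteq> (\<lambda>(x, y). HE x y) ` skew_dom a0 n P Q" by auto
  moreover have "{VE x y | x y. (x, y - 1) \<in> skew_dom a0 n P Q \<and> (x, y) \<in> skew_dom a0 n P Q}
      \<subseteq> (\<lambda>(x, y). VE x y) ` skew_dom a0 n P Q" by auto
  ultimately show ?thesis unfolding dom_edges_def
    using skew_dom_finite by (auto intro: finite_subset)
qed

lemma dom_edges_mir:
  assumes d: "skew_domain n P Q" and e: "e \<in> dom_edges a0 n P Q"
  shows "mir e \<in> dom_edges a0 n P Q"
proof -
  have sP: "sym_path n P" and sQ: "sym_path n Q" using d by (auto simp: skew_domain_def)
  have neg: "j \<in> pm_set n \<Longrightarrow> - j \<in> pm_set n" for j by (auto simp: pm_iff)
  show ?thesis using e[unfolded dom_edges_def]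
  proof (elim UnE)
    assume "e \<in> path_edge a0 n P ` pm_set n"
    then show ?thesis using mir_path_edge[OF sP] neg by (auto simp: dom_edges_def)
  next
    assume "e \<in> path_edge a0 n Q ` pm_set n"
    then show ?thesis using mir_path_edge[OF sQ] neg by (auto simp: dom_edges_def)
  next
    assume "e \<in> {HE x y | x y. (x - 1, y) \<in> skew_dom a0 n P Q \<and> (x, y) \<in> skew_dom a0 n P Q}"
    then show ?thesis using skew_dom_sym[OF d] by (fastforce simp: dom_edges_def)
  next
    assume "e \<in> {VE x y | x y. (x, y - 1) \<in> skew_dom a0 n P Q \<and> (x, y) \<in> skew_dom a0 n P Q}"
    then show ?thesis using skew_dom_sym[OF d] by (fastforce simp: dom_edges_def)
  qed
qed




lemma dual_a_Suc: "m < length R \<Longrightarrow> dual_a a0 R (Suc m) = dual_a a0 R m - (if R ! m then 0 else 1)"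
  using cntL_Suc[of m R] by (simp add: dual_a_def)

lemma Pedge_in: "j \<in> pm_set n \<Longrightarrow> path_edge a0 n P j \<in> dom_edges a0 n P R"
  unfolding dom_edges_def by blast
lemma Qedge_in: "j \<in> pm_set n \<Longrightarrow> path_edge a0 n R j \<in> dom_edges a0 n P R"
  unfolding dom_edges_def by blast

locale corner =
  fixes a0 :: int and n :: nat and P Q :: "bool list" and x y :: int
  assumes dom: "skew_domain n P Q"
    and vin: "(x, y) \<in> skew_dom a0 n P Q"
    and xley: "x \<le> y"
    and r_out: "(x + 1, y) \<notin> skew_dom a0 n P Q"
    and u_out: "(x, y + 1) \<notin> skew_dom a0 n P Q"
begin

definition k where "k = nat (y - x)"
definition i where "i = n + k - 1"
abbreviation aP where "aP \<equiv> dual_a a0 P"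
abbreviation aQ where "aQ \<equiv> dual_a a0 Q"

lemma sP: "sym_path n P" and sQ: "sym_path n Q" using dom by (auto simp: skew_domain_def)
lemma lenP: "length P = 2 * n" and lenQ: "length Q = 2 * n" using sP sQ sym_len by auto

lemma yk: "y = x + int k" using xley by (simp add: k_def)

lemma vin': "- int n \<le> int k \<and> int k \<le> int n \<and> aP (n + k) < x \<and> x \<le> aQ (n + k)"
proof -
  have "nat (y - x + int n) = n + k" using xley by (simp add: k_def nat_add_distrib)
  then show ?thesis using vin unfolding skew_dom_iff using yk by simp
qed

lemma k_lt: "k < n"
proof (rule ccontr)
  assume "\<not> k < n"
  then have "k = n" using vin' by simp
  then have "aP (2 * n) < aQ (2 * n)" using vin' by (simp add: mult_2)
  then show False using sym_cnt_full[OF sP] sym_cnt_full[OF sQ] by (simp add: dual_a_def)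
qed

lemma n_pos: "0 < n" using k_lt by simp

lemma i_props: "Suc i = n + k" "Suc (Suc i) \<le> 2 * n" "int i = int n + int k - 1" "i < 2 * n"
  using k_lt n_pos by (auto simp: i_def)

lemma aP1: "aP (Suc i) < x" using vin' unfolding i_props(1)[symmetric] by simp
lemma aQ1: "x \<le> aQ (Suc i)" using vin' unfolding i_props(1)[symmetric] by simp

lemma aP_step: "m < 2 * n \<Longrightarrow> aP m - 1 \<le> aP (Suc m) \<and> aP (Suc m) \<le> aP m"
  using dual_a_Suc[of m P a0] lenP by simp
lemma aQ_step: "m < 2 * n \<Longrightarrow> aQ m - 1 \<le> aQ (Suc m) \<and> aQ (Suc m) \<le> aQ m"
  using dual_a_Suc[of m Q a0] lenQ by simp

lemma Q_corner: "Q ! i" "\<not> Q ! Suc i" "aQ i = x" "aQ (Suc i) = x" "aQ (Suc (Suc i)) = x - 1"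
proof -
  have d1: "nat (y - (x + 1) + int n) = i" using i_props yk by simp
  have "- int n \<le> y - (x + 1)" "y - (x + 1) \<le> int n" using yk k_lt by auto
  then have r: "\<not> (aP i < x + 1 \<and> x + 1 \<le> aQ i)" using r_out unfolding skew_dom_iff d1 by simp
  have "aP i \<le> aP (Suc i) + 1" using aP_step[of i] i_props(4) by simp
  then have "aQ i \<le> x" using r aP1 by simp
  moreover have "aQ (Suc i) \<le> aQ i" using aQ_step[OF i_props(4)] by (rule conjunct2)
  ultimately show qi: "aQ i = x" "aQ (Suc i) = x" using aQ1 by auto
  then show "Q ! i" using dual_a_Suc[of i Q a0] lenQ i_props by (auto split: if_splits)
  have d2: "nat (y + 1 - x + int n) = Suc (Suc i)" using i_props yk by simp
  have "- int n \<le> y + 1 - x" "y + 1 - x \<le> int n" using yk k_lt by auto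
  then have u: "\<not> (aP (Suc (Suc i)) < x \<and> x \<le> aQ (Suc (Suc i)))" using u_out unfolding skew_dom_iff d2 by simp
  have si: "Suc i < 2 * n" using i_props(2) by simp
  have "aP (Suc (Suc i)) \<le> aP (Suc i)" using aP_step[OF si] by (rule conjunct2)
  then have "aQ (Suc (Suc i)) < x" using u aP1 by simp
  moreover have "aQ (Suc i) - 1 \<le> aQ (Suc (Suc i))" using aQ_step[OF si] by (rule conjunct1)
  ultimately show "aQ (Suc (Suc i)) = x - 1" using qi by simp
  then show "\<not> Q ! Suc i" using dual_a_Suc[of "Suc i" Q a0] lenQ si qi by (auto split: if_splits)
qed

lemma Q_mirror_bits: "Q ! (2 * n - 2 - i)" "\<not> Q ! (2 * n - 1 - i)"
proof -
  have "Q ! (2 * n - 1 - Suc i) = (\<not> Q ! Suc i)" using sym_nth[OF sQ, of "Suc i"] i_props(2) by simp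
  moreover have "2 * n - 1 - Suc i = 2 * n - 2 - i" by simp
  ultimately show "Q ! (2 * n - 2 - i)" using Q_corner by simp
  show "\<not> Q ! (2 * n - 1 - i)" using sym_nth[OF sQ i_props(4)] Q_corner(1) by blast
qed


definition gQ where "gQ r = (if r = i \<or> r = 2 * n - 2 - i then False else if r = Suc i \<or> r = 2 * n - 1 - i then True else Q ! r)"
definition Q' where "Q' = map gQ [0..<2 * n]"
definition D where "D m = (if m = Suc i \<or> m = 2 * n - 1 - i then 1 else (0::int))"

lemma lenQ': "length Q' = 2 * n" by (simp add: Q'_def)
lemma Q'_nth: "r < 2 * n \<Longrightarrow> Q' ! r = gQ r" by (simp add: Q'_def)

lemma D_step:
  assumes m: "m < 2 * n"
  shows "D m + (if gQ m then 0 else 1) = (if Q ! m then 0 else 1) + D (Suc m)"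
proof -
  have f: "Q ! i" "\<not> Q ! Suc i" "Q ! (2 * n - 2 - i)" "\<not> Q ! (2 * n - 1 - i)"
    using Q_corner Q_mirror_bits by auto
  have ii: "Suc i = n + k" "Suc (Suc i) \<le> 2 * n" using i_props by auto
  show ?thesis
  proof (cases "k = 0")
    case True
    then have e: "2 * n - 2 - i = i" "2 * n - 1 - i = Suc i" using ii by auto
    show ?thesis using f unfolding D_def gQ_def e by auto
  next
    case False
    then have o: "2 * n - 1 - i < i" "2 * n - 2 - i < i" "Suc (2 * n - 2 - i) = 2 * n - 1 - i" using ii by auto
    have o2: "Suc m = 2 * n - 1 - i \<longleftrightarrow> m = 2 * n - 2 - i" using ii False by auto
    show ?thesis using f o o2 unfolding D_def gQ_def by auto
  qed
qed

lemma cntQ': "m \<le> 2 * n \<Longrightarrow> cntL Q' m = cntL Q m + D m"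
proof (induction m)
  case 0
  have "Suc (Suc i) \<le> 2 * n" using i_props by auto
  then show ?case by (simp add: D_def)
next
  case (Suc m)
  then have m: "m < 2 * n" by simp
  have "cntL Q' (Suc m) = cntL Q' m + (if gQ m then 0 else 1)" using cntL_Suc[of m Q'] lenQ' Q'_nth m by simp
  moreover have "cntL Q (Suc m) = cntL Q m + (if Q ! m then 0 else 1)" using cntL_Suc[of m Q] lenQ m by simp
  ultimately show ?case using Suc D_step[OF m] by simp
qed

lemma aQ': "m \<le> 2 * n \<Longrightarrow> dual_a a0 Q' m = aQ m - D m"
  using cntQ' by (simp add: dual_a_def)


lemma sQ': "sym_path n Q'"
  unfolding sym_path_def
proof (intro conjI allI impI)
  show "length Q' = 2 * n" by (rule lenQ')
  fix r assume r: "r < 2 * n"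
  have r2: "2 * n - 1 - r < 2 * n" using n_pos by simp
  have qs: "Q ! r = (\<not> Q ! (2 * n - 1 - r))" using sym_nth[OF sQ r] r
    by (metis sym_nth[OF sQ r2] diff_diff_cancel less_imp_le_nat Suc_leI diff_Suc_1 le_add_diff_inverse2 n_pos One_nat_def)
  have ii: "Suc i = n + k" "Suc (Suc i) \<le> 2 * n" using i_props by auto
  have rr: "2 * n - 1 - (2 * n - 1 - r) = r" using r by simp
  show "Q' ! r = (\<not> Q' ! (2 * n - 1 - r))"
    unfolding Q'_nth[OF r] Q'_nth[OF r2]
  proof (cases "k = 0")
    case True
    then have e: "2 * n - 2 - i = i" "2 * n - 1 - i = Suc i" using ii by auto
    have e2: "r = i \<longleftrightarrow> 2 * n - 1 - r = Suc i" "r = Suc i \<longleftrightarrow> 2 * n - 1 - r = i" using r ii True by auto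
    show "gQ r = (\<not> gQ (2 * n - 1 - r))" unfolding gQ_def e using e2 qs by auto
  next
    case False
    have e2: "r = i \<longleftrightarrow> 2 * n - 1 - r = 2 * n - 1 - i" "r = Suc i \<longleftrightarrow> 2 * n - 1 - r = 2 * n - 2 - i"
      "r = 2 * n - 1 - i \<longleftrightarrow> 2 * n - 1 - r = i" "r = 2 * n - 2 - i \<longleftrightarrow> 2 * n - 1 - r = Suc i"
      using r ii by auto
    have o: "2 * n - 1 - i \<noteq> i" "2 * n - 2 - i \<noteq> i" "2 * n - 1 - i \<noteq> Suc i" "2 * n - 2 - i \<noteq> Suc i"
      "2 * n - 2 - i \<noteq> 2 * n - 1 - i"
      using ii False by auto
    show "gQ r = (\<not> gQ (2 * n - 1 - r))" unfolding gQ_def using e2 qs o by auto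
  qed
qed

lemma aQ_mirror: "aQ (2 * n - 1 - i) = y"
proof -
  have "aQ (2 * n - Suc i) = aQ (Suc i) + int (Suc i) - int n" using dual_a_sym[OF sQ, of "Suc i" a0] i_props(2) by simp
  then show ?thesis using Q_corner i_props(3) yk by simp
qed

lemma domQ': "skew_domain n P Q'"
  unfolding skew_domain_def
proof (intro conjI allI impI)
  show "sym_path n P" by (rule sP)
  show "sym_path n Q'" by (rule sQ')
  fix m assume m: "m \<le> 2 * n"
  have c1: "cntL Q (Suc i) + 1 \<le> cntL P (Suc i)" using aP1 Q_corner by (simp add: dual_a_def)
  have si: "Suc i \<le> 2 * n" using i_props by auto
  have c2: "cntL Q (2 * n - Suc i) + 1 \<le> cntL P (2 * n - Suc i)"
    using c1 sym_cnt[OF sP si] sym_cnt[OF sQ si] by simp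
  have c0: "cntL Q m \<le> cntL P m" using dom m by (simp add: skew_domain_def)
  show "cntL Q' m \<le> cntL P m" using cntQ'[OF m] c0 c1 c2 unfolding D_def by (auto split: if_splits)
qed

lemma A'_iff: "(x', y') \<in> skew_dom a0 n P Q' \<longleftrightarrow>
     (x', y') \<in> skew_dom a0 n P Q \<and> (x', y') \<noteq> (x, y) \<and> (x', y') \<noteq> (y, x)"
proof -
  define m where "m = nat (y' - x' + int n)"
  have ii: "Suc (Suc i) \<le> 2 * n" "int i = int n + int k - 1" using i_props by auto
  show ?thesis
  proof (cases "- int n \<le> y' - x' \<and> y' - x' \<le> int n")
    case False then show ?thesis unfolding skew_dom_iff by auto
  next
    case True
    then have mm: "m \<le> 2 * n" "int m = y' - x' + int n" by (auto simp: m_def)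
    have L: "(x', y') \<in> skew_dom a0 n P Q' \<longleftrightarrow> aP m < x' \<and> x' \<le> aQ m - D m"
      using True aQ'[OF mm(1)] unfolding skew_dom_iff m_def[symmetric] by simp
    have R: "(x', y') \<in> skew_dom a0 n P Q \<longleftrightarrow> aP m < x' \<and> x' \<le> aQ m"
      using True unfolding skew_dom_iff m_def[symmetric] by simp
    have mi: "m = Suc i \<longleftrightarrow> int m = int n + int k" using ii(2) by linarith
    have e2: "2 * n - 1 - i = n - k" using ii k_lt by linarith
    have mi2: "m = 2 * n - 1 - i \<longleftrightarrow> int m = int n - int k" unfolding e2 using k_lt by linarith
    have p1: "(x', y') = (x, y) \<longleftrightarrow> m = Suc i \<and> x' = aQ m"
    proof
      assume e: "(x', y') = (x, y)"
      then have "int m = int n + int k" using mm yk by auto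
      then have "m = Suc i" using mi by simp
      then show "m = Suc i \<and> x' = aQ m" using e Q_corner by auto
    next
      assume e: "m = Suc i \<and> x' = aQ m"
      then have "x' = x" using Q_corner by simp
      moreover have "int m = int n + int k" using e mi by simp
      ultimately show "(x', y') = (x, y)" using mm yk by auto
    qed
    have p2: "(x', y') = (y, x) \<longleftrightarrow> m = 2 * n - 1 - i \<and> x' = aQ m"
    proof
      assume e: "(x', y') = (y, x)"
      then have "int m = int n - int k" using mm yk by auto
      then have "m = 2 * n - 1 - i" using mi2 by simp
      then show "m = 2 * n - 1 - i \<and> x' = aQ m" using e aQ_mirror by auto
    next
      assume e: "m = 2 * n - 1 - i \<and> x' = aQ m"
      then have "x' = y" using aQ_mirror by simp
      moreover have "int m = int n - int k" using e mi2 by simp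
      ultimately show "(x', y') = (y, x)" using mm yk by auto
    qed
    show ?thesis unfolding L R p1 p2 D_def by auto
  qed
qed

lemma A'_sub: "skew_dom a0 n P Q' \<subseteq> skew_dom a0 n P Q" using A'_iff by auto


lemma lohi_pm: "lo k \<in> pm_set n" "hi k \<in> pm_set n" "- lo k \<in> pm_set n" "- hi k \<in> pm_set n"
  using k_lt by (auto simp: lo_def hi_def pm_iff)

lemma lab_lo: "label_idx n (lo k) = i" using i_props k_lt by (auto simp: label_idx_def lo_def)
lemma lab_hi: "label_idx n (hi k) = Suc i" using i_props by (auto simp: label_idx_def hi_def)
lemma lab_mlo: "label_idx n (- lo k) = 2 * n - 1 - i" using label_neg[OF lohi_pm(1)] lab_lo by simp
lemma lab_mhi: "label_idx n (- hi k) = 2 * n - 2 - i" using label_neg[OF lohi_pm(2)] lab_hi by simp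

lemma pQlo: "path_edge a0 n Q (lo k) = HE (x + 1) y"
  unfolding path_edge_def lab_lo using step_edge_eq[of i Q a0 n] lenQ i_props(3,4) Q_corner yk by simp

lemma pQhi: "path_edge a0 n Q (hi k) = VE x (y + 1)"
proof -
  have si: "Suc i < length Q" using lenQ i_props(2) by simp
  show ?thesis unfolding path_edge_def lab_hi using step_edge_eq[OF si, of a0 n] i_props(3) Q_corner yk by simp
qed

lemma par: "Suc i \<noteq> 2 * n - 2 - i" "i \<noteq> 2 * n - 1 - i" "i \<noteq> 2 * n - Suc i" "Suc i \<noteq> 2 * n - Suc (Suc i)"
  using i_props(2,4) by presburger+

lemma pQ'lo: "path_edge a0 n Q' (lo k) = VE x y"
proof -
  have il: "i < length Q'" using lenQ' i_props(4) by simp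
  have "Q' ! i = False" using Q'_nth i_props(4) by (simp add: gQ_def)
  moreover have "dual_a a0 Q' i = x" using aQ'[of i] i_props(4) Q_corner par by (simp add: D_def)
  ultimately show ?thesis unfolding path_edge_def lab_lo using step_edge_eq[OF il, of a0 n] i_props(3) yk by simp
qed

lemma pQ'hi: "path_edge a0 n Q' (hi k) = HE x y"
proof -
  have il: "Suc i < length Q'" using lenQ' i_props(2) by simp
  have "Q' ! Suc i = True" using Q'_nth i_props(2) par by (simp add: gQ_def)
  moreover have "dual_a a0 Q' (Suc i) = x - 1" using aQ'[of "Suc i"] i_props(2) Q_corner by (simp add: D_def)
  ultimately show ?thesis unfolding path_edge_def lab_hi using step_edge_eq[OF il, of a0 n] i_props(3) yk by simp
qed

lemma pQ'other:
  assumes j: "j \<in> pm_set n" "j \<notin> {lo k, hi k, - lo k, - hi k}"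
  shows "path_edge a0 n Q' j = path_edge a0 n Q j"
proof -
  define r where "r = label_idx n j"
  have r: "r < 2 * n" using label_lt[OF j(1)] by (simp add: r_def)
  have nr: "r \<noteq> i" "r \<noteq> Suc i" "r \<noteq> 2 * n - 1 - i" "r \<noteq> 2 * n - 2 - i"
    using j label_inj[OF j(1) lohi_pm(1)] label_inj[OF j(1) lohi_pm(2)] label_inj[OF j(1) lohi_pm(3)]
      label_inj[OF j(1) lohi_pm(4)] lab_lo lab_hi lab_mlo lab_mhi unfolding r_def by auto
  have "Q' ! r = Q ! r" using Q'_nth[OF r] nr by (simp add: gQ_def)
  moreover have "dual_a a0 Q' r = aQ r" using aQ'[of r] r nr by (simp add: D_def)
  ultimately show ?thesis unfolding path_edge_def r_def[symmetric]
    using step_edge_eq[of r Q a0 n] step_edge_eq[of r Q' a0 n] r lenQ lenQ' by simp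
qed

lemma pQmlo: "path_edge a0 n Q (- lo k) = VE y (x + 1)"
  using mir_path_edge[OF sQ lohi_pm(1), of a0] pQlo by simp
lemma pQmhi: "path_edge a0 n Q (- hi k) = HE (y + 1) x"
  using mir_path_edge[OF sQ lohi_pm(2), of a0] pQhi by simp
lemma pQ'mlo: "path_edge a0 n Q' (- lo k) = HE y x"
  using mir_path_edge[OF sQ' lohi_pm(1), of a0] pQ'lo by simp
lemma pQ'mhi: "path_edge a0 n Q' (- hi k) = VE y x"
  using mir_path_edge[OF sQ' lohi_pm(2), of a0] pQ'hi by simp

lemma Plo: assumes "(x, y - 1) \<notin> skew_dom a0 n P Q" shows "path_edge a0 n P (lo k) = VE x y"
proof -
  have d: "nat (y - 1 - x + int n) = i" using i_props(3) yk by simp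
  have "- int n \<le> y - 1 - x" "y - 1 - x \<le> int n" using yk k_lt by auto
  then have r: "\<not> (aP i < x \<and> x \<le> aQ i)" using assms unfolding skew_dom_iff d by simp
  then have "x \<le> aP i" using Q_corner by simp
  moreover have "aP i - 1 \<le> aP (Suc i)" using aP_step[OF i_props(4)] by (rule conjunct1)
  ultimately have a: "aP i = x" "aP (Suc i) = x - 1" using aP1 by auto
  then have "\<not> P ! i" using dual_a_Suc[of i P a0] lenP i_props(4) by (auto split: if_splits)
  moreover have il: "i < length P" using lenP i_props(4) by simp
  ultimately show ?thesis unfolding path_edge_def lab_lo using step_edge_eq[OF il, of a0 n] a i_props(3) yk by simp
qed

lemma Phi: assumes "(x - 1, y) \<notin> skew_dom a0 n P Q" shows "path_edge a0 n P (hi k) = HE x y"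
proof -
  have d: "nat (y - (x - 1) + int n) = Suc (Suc i)" using i_props(3) yk by simp
  have "- int n \<le> y - (x - 1)" "y - (x - 1) \<le> int n" using yk k_lt by auto
  then have r: "\<not> (aP (Suc (Suc i)) < x - 1 \<and> x - 1 \<le> aQ (Suc (Suc i)))" using assms unfolding skew_dom_iff d by simp
  then have "x - 1 \<le> aP (Suc (Suc i))" using Q_corner by simp
  moreover have si: "Suc i < 2 * n" using i_props(2) by simp
  moreover have "aP (Suc (Suc i)) \<le> aP (Suc i)" using aP_step[OF si] by (rule conjunct2)
  ultimately have a: "aP (Suc i) = x - 1" "aP (Suc (Suc i)) = x - 1" using aP1 by auto
  then have "P ! Suc i" using dual_a_Suc[of "Suc i" P a0] lenP si by (auto split: if_splits)
  moreover have il: "Suc i < length P" using lenP si by simp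
  ultimately show ?thesis unfolding path_edge_def lab_hi using step_edge_eq[OF il, of a0 n] a i_props(3) yk by simp
qed


definition NN where "NN = {HE (x + 1) y, VE x (y + 1), VE y (x + 1), HE (y + 1) x}"

lemma NN_eq: "NN = path_edge a0 n Q ` {lo k, hi k, - lo k, - hi k}"
  unfolding NN_def using pQlo pQhi pQmlo pQmhi by auto

lemma vin_x: "(x, y) \<in> skew_dom a0 n P Q" by (rule vin)
lemma vin_m: "(y, x) \<in> skew_dom a0 n P Q" using skew_dom_sym[OF dom vin] .

lemma E_HE: "HE x y \<in> dom_edges a0 n P Q"
proof (cases "(x - 1, y) \<in> skew_dom a0 n P Q")
  case True then show ?thesis using vin unfolding dom_edges_def by auto
next
  case False
  have "path_edge a0 n P (hi k) \<in> dom_edges a0 n P Q" by (rule Pedge_in[OF lohi_pm(2)])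
  then show ?thesis unfolding Phi[OF False] .
qed

lemma E_VE: "VE x y \<in> dom_edges a0 n P Q"
proof (cases "(x, y - 1) \<in> skew_dom a0 n P Q")
  case True then show ?thesis using vin unfolding dom_edges_def by auto
next
  case False
  have "path_edge a0 n P (lo k) \<in> dom_edges a0 n P Q" by (rule Pedge_in[OF lohi_pm(1)])
  then show ?thesis unfolding Plo[OF False] .
qed

lemma E'_sub_E: "dom_edges a0 n P Q' \<subseteq> dom_edges a0 n P Q"
proof
  fix e assume e: "e \<in> dom_edges a0 n P Q'"
  have m1: "HE y x \<in> dom_edges a0 n P Q" using dom_edges_mir[OF dom E_VE] by simp
  have m2: "VE y x \<in> dom_edges a0 n P Q" using dom_edges_mir[OF dom E_HE] by simp
  show "e \<in> dom_edges a0 n P Q" using e[unfolded dom_edges_def]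
  proof (elim UnE)
    assume "e \<in> path_edge a0 n P ` pm_set n" then show ?thesis by (auto simp: dom_edges_def)
  next
    assume "e \<in> path_edge a0 n Q' ` pm_set n"
    then obtain j where j: "j \<in> pm_set n" "e = path_edge a0 n Q' j" by auto
    show ?thesis
    proof (cases "j \<in> {lo k, hi k, - lo k, - hi k}")
      case True
      then show ?thesis using j E_HE E_VE m1 m2 pQ'lo pQ'hi pQ'mlo pQ'mhi by auto
    next
      case False
      then show ?thesis using j pQ'other[of j] by (auto simp: dom_edges_def)
    qed
  next
    assume "e \<in> {HE x y | x y. (x - 1, y) \<in> skew_dom a0 n P Q' \<and> (x, y) \<in> skew_dom a0 n P Q'}"
    then show ?thesis using A'_sub by (auto simp: dom_edges_def)
  next
    assume "e \<in> {VE x y | x y. (x, y - 1) \<in> skew_dom a0 n P Q' \<and> (x, y) \<in> skew_dom a0 n P Q'}"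
    then show ?thesis using A'_sub by (auto simp: dom_edges_def)
  qed
qed

lemma NN_sub_E: "NN \<subseteq> dom_edges a0 n P Q"
  unfolding NN_eq dom_edges_def using lohi_pm by auto

lemma E_sub: "dom_edges a0 n P Q \<subseteq> dom_edges a0 n P Q' \<union> NN"
proof
  fix e assume e: "e \<in> dom_edges a0 n P Q"
  have q0: "\<And>j. j \<in> pm_set n \<Longrightarrow> path_edge a0 n Q' j \<in> dom_edges a0 n P Q'" by (rule Qedge_in)
  have q1: "HE x y \<in> dom_edges a0 n P Q'" "VE x y \<in> dom_edges a0 n P Q'"
    "HE y x \<in> dom_edges a0 n P Q'" "VE y x \<in> dom_edges a0 n P Q'"
    using q0[OF lohi_pm(2)] q0[OF lohi_pm(1)] q0[OF lohi_pm(3)] q0[OF lohi_pm(4)]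
    unfolding pQ'lo pQ'hi pQ'mlo pQ'mhi by auto
  show "e \<in> dom_edges a0 n P Q' \<union> NN" using e[unfolded dom_edges_def]
  proof (elim UnE)
    assume "e \<in> path_edge a0 n P ` pm_set n" then show ?thesis by (auto simp: dom_edges_def)
  next
    assume "e \<in> path_edge a0 n Q ` pm_set n"
    then obtain j where j: "j \<in> pm_set n" "e = path_edge a0 n Q j" by auto
    show ?thesis
    proof (cases "j \<in> {lo k, hi k, - lo k, - hi k}")
      case True
      then show ?thesis using j unfolding NN_eq by auto
    next
      case False
      then have "e = path_edge a0 n Q' j" using j pQ'other[of j] by simp
      then show ?thesis using q0[OF j(1)] by simp
    qed
  next
    assume "e \<in> {HE x y | x y. (x - 1, y) \<in> skew_dom a0 n P Q \<and> (x, y) \<in> skew_dom a0 n P Q}"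
    then obtain a b where ab: "e = HE a b" "(a - 1, b) \<in> skew_dom a0 n P Q" "(a, b) \<in> skew_dom a0 n P Q" by auto
    show ?thesis
    proof (cases "(a - 1, b) \<in> skew_dom a0 n P Q' \<and> (a, b) \<in> skew_dom a0 n P Q'")
      case True then show ?thesis using ab by (auto simp: dom_edges_def)
    next
      case False
      then have "(a - 1, b) = (x, y) \<or> (a - 1, b) = (y, x) \<or> (a, b) = (x, y) \<or> (a, b) = (y, x)"
        using ab A'_iff by blast
      then show ?thesis using ab q1 by (auto simp: NN_def)
    qed
  next
    assume "e \<in> {VE x y | x y. (x, y - 1) \<in> skew_dom a0 n P Q \<and> (x, y) \<in> skew_dom a0 n P Q}"
    then obtain a b where ab: "e = VE a b" "(a, b - 1) \<in> skew_dom a0 n P Q" "(a, b) \<in> skew_dom a0 n P Q" by auto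
    show ?thesis
    proof (cases "(a, b - 1) \<in> skew_dom a0 n P Q' \<and> (a, b) \<in> skew_dom a0 n P Q'")
      case True then show ?thesis using ab by (auto simp: dom_edges_def)
    next
      case False
      then have "(a, b - 1) = (x, y) \<or> (a, b - 1) = (y, x) \<or> (a, b) = (x, y) \<or> (a, b) = (y, x)"
        using ab A'_iff by blast
      then show ?thesis using ab q1 by (auto simp: NN_def)
    qed
  qed
qed

lemma v_notin': "(x, y) \<notin> skew_dom a0 n P Q'" "(y, x) \<notin> skew_dom a0 n P Q'"
  using A'_iff by auto

lemma HE_notin: "HE (x + 1) y \<notin> dom_edges a0 n P Q'"
proof
  assume "HE (x + 1) y \<in> dom_edges a0 n P Q'"
  then show False unfolding dom_edges_def
  proof (elim UnE)
    assume "HE (x + 1) y \<in> path_edge a0 n P ` pm_set n"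
    then obtain j where j: "j \<in> pm_set n" "step_edge a0 n P (label_idx n j) = HE (x + 1) y"
      by (auto simp: path_edge_def)
    have r: "label_idx n j < length P" using label_lt[OF j(1)] lenP by simp
    from step_inv_HE[OF r j(2)] have h: "P ! label_idx n j" "aP (label_idx n j) = x"
      "int (label_idx n j) = y - (x + 1) + int n" by auto
    then have "label_idx n j = i" using i_props(3) yk by simp
    then show False using h dual_a_Suc[of i P a0] lenP i_props(4) aP1 by simp
  next
    assume "HE (x + 1) y \<in> path_edge a0 n Q' ` pm_set n"
    then obtain j where j: "j \<in> pm_set n" "step_edge a0 n Q' (label_idx n j) = HE (x + 1) y"
      by (auto simp: path_edge_def)
    have r: "label_idx n j < length Q'" using label_lt[OF j(1)] lenQ' by simp
    from step_inv_HE[OF r j(2)] have h: "Q' ! label_idx n j" "int (label_idx n j) = y - (x + 1) + int n" by auto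
    then have "label_idx n j = i" using i_props(3) yk by simp
    then show False using h Q'_nth i_props(4) by (simp add: gQ_def)
  next
    assume "HE (x + 1) y \<in> {HE x y | x y. (x - 1, y) \<in> skew_dom a0 n P Q' \<and> (x, y) \<in> skew_dom a0 n P Q'}"
    then show False using v_notin' by auto
  next
    assume "HE (x + 1) y \<in> {VE x y | x y. (x, y - 1) \<in> skew_dom a0 n P Q' \<and> (x, y) \<in> skew_dom a0 n P Q'}"
    then show False by auto
  qed
qed

lemma VE_notin: "VE x (y + 1) \<notin> dom_edges a0 n P Q'"
proof
  assume "VE x (y + 1) \<in> dom_edges a0 n P Q'"
  then show False unfolding dom_edges_def
  proof (elim UnE)
    assume "VE x (y + 1) \<in> path_edge a0 n P ` pm_set n"
    then obtain j where j: "j \<in> pm_set n" "step_edge a0 n P (label_idx n j) = VE x (y + 1)"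
      by (auto simp: path_edge_def)
    have r: "label_idx n j < length P" using label_lt[OF j(1)] lenP by simp
    from step_inv_VE[OF r j(2)] have h: "aP (label_idx n j) = x"
      "int (label_idx n j) = y + 1 - x + int n - 1" by auto
    then have "label_idx n j = Suc i" using i_props(3) yk by simp
    then show False using h aP1 by simp
  next
    assume "VE x (y + 1) \<in> path_edge a0 n Q' ` pm_set n"
    then obtain j where j: "j \<in> pm_set n" "step_edge a0 n Q' (label_idx n j) = VE x (y + 1)"
      by (auto simp: path_edge_def)
    have r: "label_idx n j < length Q'" using label_lt[OF j(1)] lenQ' by simp
    from step_inv_VE[OF r j(2)] have h: "\<not> Q' ! label_idx n j" "int (label_idx n j) = y + 1 - x + int n - 1" by auto
    then have "label_idx n j = Suc i" using i_props(3) yk by simp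
    then show False using h Q'_nth i_props(2) par by (simp add: gQ_def)
  next
    assume "VE x (y + 1) \<in> {HE x y | x y. (x - 1, y) \<in> skew_dom a0 n P Q' \<and> (x, y) \<in> skew_dom a0 n P Q'}"
    then show False by auto
  next
    assume "VE x (y + 1) \<in> {VE x y | x y. (x, y - 1) \<in> skew_dom a0 n P Q' \<and> (x, y) \<in> skew_dom a0 n P Q'}"
    then show False using v_notin' by auto
  qed
qed

lemma NN_disj: "dom_edges a0 n P Q' \<inter> NN = {}"
proof -
  have "VE y (x + 1) \<notin> dom_edges a0 n P Q'"
    using dom_edges_mir[OF domQ', of "VE y (x + 1)"] HE_notin by auto
  moreover have "HE (y + 1) x \<notin> dom_edges a0 n P Q'"
    using dom_edges_mir[OF domQ', of "HE (y + 1) x"] VE_notin by auto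
  ultimately show ?thesis using HE_notin VE_notin by (auto simp: NN_def)
qed

lemma E_eq: "dom_edges a0 n P Q = dom_edges a0 n P Q' \<union> NN"
  using E_sub E'_sub_E NN_sub_E by blast

lemma vert_edges:
  assumes u: "(ux, uy) \<in> skew_dom a0 n P Q'"
  shows "HE ux uy \<notin> NN" "VE ux uy \<notin> NN" "HE (ux + 1) uy \<notin> NN" "VE ux (uy + 1) \<notin> NN"
proof -
  have uA: "(ux, uy) \<in> skew_dom a0 n P Q" using u A'_sub by auto
  have nr: "(y + 1, x) \<notin> skew_dom a0 n P Q" using u_out skew_dom_sym[OF dom, of "y + 1" x] by auto
  have nu: "(y, x + 1) \<notin> skew_dom a0 n P Q" using r_out skew_dom_sym[OF dom, of y "x + 1"] by auto
  show "HE ux uy \<notin> NN" using uA r_out nr by (auto simp: NN_def)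
  show "VE ux uy \<notin> NN" using uA u_out nu by (auto simp: NN_def)
  show "HE (ux + 1) uy \<notin> NN" using u v_notin' by (auto simp: NN_def)
  show "VE ux (uy + 1) \<notin> NN" using u v_notin' by (auto simp: NN_def)
qed

end




definition Cset :: "int \<Rightarrow> nat \<Rightarrow> bool list \<Rightarrow> bool list \<Rightarrow> (int \<Rightarrow> int) \<Rightarrow> (int \<Rightarrow> int) \<Rightarrow> (edge \<Rightarrow> int) set" where
  "Cset a0 n P R \<sigma> \<pi> = {c \<in> Pi\<^sub>E (dom_edges a0 n P R) (\<lambda>_. pm_set n).
               (\<forall>e \<in> dom_edges a0 n P R. c (mir e) = - c e)
             \<and> (\<forall>j \<in> pm_set n. c (path_edge a0 n P j) = \<sigma> j \<and> c (path_edge a0 n R j) = \<pi> j)}"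

lemma Pprob_Cset: "Pprob q t \<nu> z a0 n P R \<sigma> \<pi> = (\<Sum>c\<in>Cset a0 n P R \<sigma> \<pi>. \<Prod>v\<in>domp a0 n P R. vweight q t \<nu> z c v)"
  by (simp add: Pprob_def Cset_def)

lemma Cset_finite: "finite (Cset a0 n P R \<sigma> \<pi>)"
proof -
  have "finite (Pi\<^sub>E (dom_edges a0 n P R) (\<lambda>_. pm_set n))" by (intro finite_PiE dom_edges_finite) simp
  then show ?thesis unfolding Cset_def by simp
qed

lemma SP_finite: "finite (signed_perms n)"
proof -
  have "inj_on (\<lambda>\<pi>. restrict \<pi> (pm_set n)) (signed_perms n)"
  proof (rule inj_onI)
    fix f g assume f: "f \<in> signed_perms n" and g: "g \<in> signed_perms n"
      and e: "restrict f (pm_set n) = restrict g (pm_set n)"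
    show "f = g"
    proof
      fix i show "f i = g i"
      proof (cases "i \<in> pm_set n")
        case True then show ?thesis using e by (metis restrict_apply')
      next
        case False then show ?thesis using SP_D(3)[OF f] SP_D(3)[OF g] by simp
      qed
    qed
  qed
  moreover have "(\<lambda>\<pi>. restrict \<pi> (pm_set n)) ` signed_perms n \<subseteq> Pi\<^sub>E (pm_set n) (\<lambda>_. pm_set n)"
    using SP_in by auto
  moreover have "finite (Pi\<^sub>E (pm_set n) (\<lambda>_. pm_set n))" by (intro finite_PiE) auto
  ultimately show ?thesis by (metis finite_imageD finite_subset)
qed

lemma Vw_nz: "Vw p qk l b r u \<noteq> 0 \<Longrightarrow> (r = l \<and> u = b) \<or> (r = b \<and> u = l)"
proof (rule ccontr)
  assume a: "Vw p qk l b r u \<noteq> 0" "\<not> ((r = l \<and> u = b) \<or> (r = b \<and> u = l))"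
  then have n1: "\<not> (r = l \<and> u = b)" and n2: "\<not> (r = b \<and> u = l)" by blast+
  have "Vw p qk l b r u = 0" unfolding Vw_def by (simp only: n1 n2 if_False if_cancel)
  then show False using a by simp
qed

context corner
begin

definition labQ where "labQ e = (THE j. j \<in> pm_set n \<and> path_edge a0 n Q j = e)"

lemma labQ: "j \<in> pm_set n \<Longrightarrow> labQ (path_edge a0 n Q j) = j"
  unfolding labQ_def by (rule the_equality) (use path_edge_inj[OF sQ] in auto)

lemma domp': "domp a0 n P Q' = domp a0 n P Q - {(x, y)}"
  unfolding domp_def using A'_iff xley by auto

lemma v_domp: "(x, y) \<in> domp a0 n P Q" using vin xley by (simp add: domp_def)

lemma NN_lab: "e \<in> NN \<Longrightarrow> labQ e \<in> {lo k, hi k, - lo k, - hi k} \<and> path_edge a0 n Q (labQ e) = e"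
  unfolding NN_eq using labQ lohi_pm by auto

lemma NN_mir: "e \<in> NN \<Longrightarrow> mir e \<in> NN" by (auto simp: NN_def)

lemma vweight_v:
  "vweight q t \<nu> z c (x, y) = Vw (pxy q t \<nu> z x y) (qpar q t k) (c (HE x y)) (c (VE x y)) (c (HE (x + 1) y)) (c (VE x (y + 1)))"
  unfolding vweight_def Vw_def k_def by (simp add: Let_def)

lemma vweight_cong: "(\<And>e. e \<in> {HE ux uy, VE ux uy, HE (ux + 1) uy, VE ux (uy + 1)} \<Longrightarrow> c e = c' e)
   \<Longrightarrow> vweight q t \<nu> z c (ux, uy) = vweight q t \<nu> z c' (ux, uy)"
  unfolding vweight_def by simp


definition Sset where "Sset \<sigma> \<pi> \<pi>' = {c \<in> Cset a0 n P Q \<sigma> \<pi>. \<forall>j\<in>pm_set n. c (path_edge a0 n Q' j) = \<pi>' j}"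

definition extc where "extc \<pi> c' = (\<lambda>e. if e \<in> dom_edges a0 n P Q' then c' e else if e \<in> NN then \<pi> (labQ e) else undefined)"

lemma Sset_agree:
  assumes p: "\<pi> \<in> signed_perms n" "\<pi>' \<in> signed_perms n" and c: "c \<in> Sset \<sigma> \<pi> \<pi>'"
  shows "\<forall>j. j \<notin> {lo k, hi k, - lo k, - hi k} \<longrightarrow> \<pi>' j = \<pi> j"
proof (intro allI impI)
  fix j assume j: "j \<notin> {lo k, hi k, - lo k, - hi k}"
  show "\<pi>' j = \<pi> j"
  proof (cases "j \<in> pm_set n")
    case True
    have "c (path_edge a0 n Q' j) = \<pi>' j" using c True by (simp add: Sset_def)
    moreover have "c (path_edge a0 n Q j) = \<pi> j" using c True by (simp add: Sset_def Cset_def)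
    ultimately show ?thesis using pQ'other[OF True j] by simp
  next
    case False then show ?thesis using SP_D(3)[OF p(1)] SP_D(3)[OF p(2)] by simp
  qed
qed

lemma ext_in:
  assumes p: "\<pi> \<in> signed_perms n" "\<pi>' \<in> signed_perms n"
    and ag: "\<forall>j. j \<notin> {lo k, hi k, - lo k, - hi k} \<longrightarrow> \<pi>' j = \<pi> j"
    and c': "c' \<in> Cset a0 n P Q' \<sigma> \<pi>'"
  shows "extc \<pi> c' \<in> Sset \<sigma> \<pi> \<pi>'"
proof -
  let ?E = "dom_edges a0 n P Q" and ?E' = "dom_edges a0 n P Q'"
  have c1: "c' \<in> Pi\<^sub>E ?E' (\<lambda>_. pm_set n)" and c2: "\<forall>e\<in>?E'. c' (mir e) = - c' e"
    and c3: "\<forall>j\<in>pm_set n. c' (path_edge a0 n P j) = \<sigma> j \<and> c' (path_edge a0 n Q' j) = \<pi>' j"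
    using c' by (auto simp: Cset_def)
  have negp: "\<pi> (- j) = - \<pi> j" for j using SP_D(2)[OF p(1)] .
  have pin: "\<pi> j \<in> pm_set n" if "j \<in> pm_set n" for j using SP_in[OF p(1) that] .
  have E: "?E = ?E' \<union> NN" by (rule E_eq)
  have disj: "?E' \<inter> NN = {}" by (rule NN_disj)
  have NNpm: "e \<in> NN \<Longrightarrow> labQ e \<in> pm_set n" for e using NN_lab[of e] lohi_pm by auto
  have P1: "extc \<pi> c' \<in> Pi\<^sub>E ?E (\<lambda>_. pm_set n)"
    unfolding PiE_iff extensional_def
  proof (intro conjI ballI CollectI allI impI)
    fix e assume "e \<in> ?E"
    then show "extc \<pi> c' e \<in> pm_set n" using c1 NNpm pin E by (auto simp: extc_def PiE_iff)
  next
    fix e assume "e \<notin> ?E"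
    then show "extc \<pi> c' e = undefined" using E by (auto simp: extc_def)
  qed
  have P2: "\<forall>e\<in>?E. extc \<pi> c' (mir e) = - extc \<pi> c' e"
  proof
    fix e assume e: "e \<in> ?E"
    show "extc \<pi> c' (mir e) = - extc \<pi> c' e"
    proof (cases "e \<in> ?E'")
      case True
      then have "mir e \<in> ?E'" using dom_edges_mir[OF domQ'] by blast
      then show ?thesis using True c2 by (simp add: extc_def)
    next
      case False
      then have eN: "e \<in> NN" using e E by blast
      then have mN: "mir e \<in> NN" by (rule NN_mir)
      then have mE: "mir e \<notin> ?E'" using disj by blast
      obtain j where j: "j \<in> pm_set n" "path_edge a0 n Q j = e" using NN_lab[OF eN] NNpm[OF eN] by blast
      have "mir e = path_edge a0 n Q (- j)" using mir_path_edge[OF sQ j(1), of a0] j(2) by simp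
      moreover have "- j \<in> pm_set n" using j(1) by (auto simp: pm_iff)
      ultimately have "labQ (mir e) = - j" using labQ by simp
      moreover have "labQ e = j" using labQ j by blast
      ultimately show ?thesis using False eN mN mE negp by (simp add: extc_def)
    qed
  qed
  have P3: "\<forall>j\<in>pm_set n. extc \<pi> c' (path_edge a0 n P j) = \<sigma> j \<and> extc \<pi> c' (path_edge a0 n Q j) = \<pi> j"
  proof
    fix j assume j: "j \<in> pm_set n"
    have "path_edge a0 n P j \<in> ?E'" using Pedge_in[OF j] .
    then have a: "extc \<pi> c' (path_edge a0 n P j) = \<sigma> j" using c3 j by (simp add: extc_def)
    have b: "extc \<pi> c' (path_edge a0 n Q j) = \<pi> j"
    proof (cases "j \<in> {lo k, hi k, - lo k, - hi k}")
      case True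
      then have "path_edge a0 n Q j \<in> NN" unfolding NN_eq by blast
      then have "path_edge a0 n Q j \<notin> ?E'" using disj by blast
      then show ?thesis using \<open>path_edge a0 n Q j \<in> NN\<close> labQ[OF j] by (simp add: extc_def)
    next
      case False
      have q: "path_edge a0 n Q j = path_edge a0 n Q' j" using pQ'other[OF j False] by simp
      have "path_edge a0 n Q' j \<in> ?E'" using Qedge_in[OF j] .
      then show ?thesis unfolding q using c3 j ag False by (simp add: extc_def)
    qed
    show "extc \<pi> c' (path_edge a0 n P j) = \<sigma> j \<and> extc \<pi> c' (path_edge a0 n Q j) = \<pi> j" using a b by simp
  qed
  have P4: "\<forall>j\<in>pm_set n. extc \<pi> c' (path_edge a0 n Q' j) = \<pi>' j"
  proof
    fix j assume j: "j \<in> pm_set n"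
    have "path_edge a0 n Q' j \<in> ?E'" using Qedge_in[OF j] .
    then show "extc \<pi> c' (path_edge a0 n Q' j) = \<pi>' j" using c3 j by (simp add: extc_def)
  qed
  show ?thesis using P1 P2 P3 P4 by (simp add: Sset_def Cset_def)
qed

lemma restr_in:
  assumes c: "c \<in> Sset \<sigma> \<pi> \<pi>'"
  shows "restrict c (dom_edges a0 n P Q') \<in> Cset a0 n P Q' \<sigma> \<pi>'"
proof -
  let ?E = "dom_edges a0 n P Q" and ?E' = "dom_edges a0 n P Q'"
  have c1: "c \<in> Pi\<^sub>E ?E (\<lambda>_. pm_set n)" and c2: "\<forall>e\<in>?E. c (mir e) = - c e"
    and c3: "\<forall>j\<in>pm_set n. c (path_edge a0 n P j) = \<sigma> j" and c4: "\<forall>j\<in>pm_set n. c (path_edge a0 n Q' j) = \<pi>' j"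
    using c by (auto simp: Sset_def Cset_def)
  have sub: "?E' \<subseteq> ?E" by (rule E'_sub_E)
  have "restrict c ?E' \<in> Pi\<^sub>E ?E' (\<lambda>_. pm_set n)" using c1 sub by (auto simp: PiE_iff)
  moreover have "\<forall>e\<in>?E'. restrict c ?E' (mir e) = - restrict c ?E' e"
    using c2 sub dom_edges_mir[OF domQ'] by auto
  moreover have "\<forall>j\<in>pm_set n. restrict c ?E' (path_edge a0 n P j) = \<sigma> j \<and> restrict c ?E' (path_edge a0 n Q' j) = \<pi>' j"
    using c3 c4 Pedge_in Qedge_in by auto
  ultimately show ?thesis by (simp add: Cset_def)
qed

lemma ext_restr:
  assumes c: "c \<in> Sset \<sigma> \<pi> \<pi>'"
  shows "extc \<pi> (restrict c (dom_edges a0 n P Q')) = c"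
proof
  fix e
  let ?E = "dom_edges a0 n P Q" and ?E' = "dom_edges a0 n P Q'"
  have c1: "c \<in> Pi\<^sub>E ?E (\<lambda>_. pm_set n)" and c3: "\<forall>j\<in>pm_set n. c (path_edge a0 n Q j) = \<pi> j"
    using c by (auto simp: Sset_def Cset_def)
  show "extc \<pi> (restrict c ?E') e = c e"
  proof (cases "e \<in> ?E'")
    case True then show ?thesis by (simp add: extc_def)
  next
    case False
    show ?thesis
    proof (cases "e \<in> NN")
      case True
      have j: "labQ e \<in> pm_set n" "path_edge a0 n Q (labQ e) = e"
        using NN_lab[OF True] lohi_pm by auto
      have "c e = \<pi> (labQ e)" using c3 j by metis
      then show ?thesis using False True by (simp add: extc_def)
    next
      case nN: False
      then have "e \<notin> ?E" using False E_eq by blast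
      then show ?thesis using False nN PiE_arb[OF c1] by (simp add: extc_def)
    qed
  qed
qed

lemma restr_ext:
  assumes c': "c' \<in> Cset a0 n P Q' \<sigma> \<pi>'"
  shows "restrict (extc \<pi> c') (dom_edges a0 n P Q') = c'"
proof
  fix e
  have c1: "c' \<in> Pi\<^sub>E (dom_edges a0 n P Q') (\<lambda>_. pm_set n)" using c' by (simp add: Cset_def)
  show "restrict (extc \<pi> c') (dom_edges a0 n P Q') e = c' e"
    using PiE_arb[OF c1, of e] by (auto simp: extc_def)
qed


lemma domp_finite: "finite (domp a0 n P R)"
  using skew_dom_finite[of a0 n P R] by (rule finite_subset[rotated]) (auto simp: domp_def)

lemma S_sum:
  assumes p: "\<pi> \<in> signed_perms n" "\<pi>' \<in> signed_perms n"
  shows "(\<Sum>c\<in>Sset \<sigma> \<pi> \<pi>'. \<Prod>u\<in>domp a0 n P Q. vweight q t \<nu> z c u)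
       = Pprob q t \<nu> z a0 n P Q' \<sigma> \<pi>' * Wt k (pxy q t \<nu> z x y) (qpar q t k) \<pi>' \<pi>"
proof (cases "\<forall>j. j \<notin> {lo k, hi k, - lo k, - hi k} \<longrightarrow> \<pi>' j = \<pi> j")
  case False
  then have "Sset \<sigma> \<pi> \<pi>' = {}" using Sset_agree[OF p] by blast
  moreover have "Wt k (pxy q t \<nu> z x y) (qpar q t k) \<pi>' \<pi> = 0" using False unfolding Wt_def by (rule if_not_P)
  ultimately show ?thesis by simp
next
  case True
  note ag = True
  let ?E' = "dom_edges a0 n P Q'"
  let ?V = "Vw (pxy q t \<nu> z x y) (qpar q t k) (\<pi>' (hi k)) (\<pi>' (lo k)) (\<pi> (lo k)) (\<pi> (hi k))"
  have W: "Wt k (pxy q t \<nu> z x y) (qpar q t k) \<pi>' \<pi> = ?V" using ag unfolding Wt_def by (rule if_P)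
  have "(\<Sum>c\<in>Sset \<sigma> \<pi> \<pi>'. \<Prod>u\<in>domp a0 n P Q. vweight q t \<nu> z c u)
      = (\<Sum>c'\<in>Cset a0 n P Q' \<sigma> \<pi>'. \<Prod>u\<in>domp a0 n P Q. vweight q t \<nu> z (extc \<pi> c') u)"
  proof (rule sum.reindex_bij_witness[where j = "\<lambda>c. restrict c ?E'" and i = "extc \<pi>"])
    fix c assume "c \<in> Sset \<sigma> \<pi> \<pi>'"
    then show "extc \<pi> (restrict c ?E') = c" "restrict c ?E' \<in> Cset a0 n P Q' \<sigma> \<pi>'"
      "(\<Prod>u\<in>domp a0 n P Q. vweight q t \<nu> z (extc \<pi> (restrict c ?E')) u) = (\<Prod>u\<in>domp a0 n P Q. vweight q t \<nu> z c u)"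
      using ext_restr restr_in by auto
  next
    fix c' assume "c' \<in> Cset a0 n P Q' \<sigma> \<pi>'"
    then show "restrict (extc \<pi> c') ?E' = c'" "extc \<pi> c' \<in> Sset \<sigma> \<pi> \<pi>'"
      using restr_ext ext_in[OF p ag] by auto
  qed
  also have "\<dots> = (\<Sum>c'\<in>Cset a0 n P Q' \<sigma> \<pi>'. ?V * (\<Prod>u\<in>domp a0 n P Q'. vweight q t \<nu> z c' u))"
  proof (rule sum.cong[OF refl])
    fix c' assume c': "c' \<in> Cset a0 n P Q' \<sigma> \<pi>'"
    have c1: "c' \<in> Pi\<^sub>E ?E' (\<lambda>_. pm_set n)" and c3: "\<forall>j\<in>pm_set n. c' (path_edge a0 n Q' j) = \<pi>' j"
      using c' by (auto simp: Cset_def)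
    have dp: "domp a0 n P Q = insert (x, y) (domp a0 n P Q')" "(x, y) \<notin> domp a0 n P Q'"
      using domp' v_domp by auto
    have rest: "vweight q t \<nu> z (extc \<pi> c') u = vweight q t \<nu> z c' u" if u: "u \<in> domp a0 n P Q'" for u
    proof -
      obtain ux uy where uu: "u = (ux, uy)" by (cases u)
      have uA: "(ux, uy) \<in> skew_dom a0 n P Q'" using u uu by (simp add: domp_def)
      show ?thesis unfolding uu
      proof (rule vweight_cong)
        fix e assume "e \<in> {HE ux uy, VE ux uy, HE (ux + 1) uy, VE ux (uy + 1)}"
        then have "e \<notin> NN" using vert_edges[OF uA] by auto
        then show "extc \<pi> c' e = c' e" using PiE_arb[OF c1, of e] by (auto simp: extc_def)
      qed
    qed
    have e1: "extc \<pi> c' (HE x y) = \<pi>' (hi k)"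
    proof -
      have "HE x y \<in> ?E'" using Qedge_in[OF lohi_pm(2), of a0 Q' P] pQ'hi by simp
      then show ?thesis using c3 lohi_pm(2) pQ'hi by (metis extc_def)
    qed
    have e2: "extc \<pi> c' (VE x y) = \<pi>' (lo k)"
    proof -
      have "VE x y \<in> ?E'" using Qedge_in[OF lohi_pm(1), of a0 Q' P] pQ'lo by simp
      then show ?thesis using c3 lohi_pm(1) pQ'lo by (metis extc_def)
    qed
    have e3: "extc \<pi> c' (HE (x + 1) y) = \<pi> (lo k)"
    proof -
      have "HE (x + 1) y \<in> NN" "HE (x + 1) y \<notin> ?E'" using HE_notin by (auto simp: NN_def)
      moreover have "labQ (HE (x + 1) y) = lo k" using labQ[OF lohi_pm(1)] pQlo by simp
      ultimately show ?thesis by (simp add: extc_def)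
    qed
    have e4: "extc \<pi> c' (VE x (y + 1)) = \<pi> (hi k)"
    proof -
      have "VE x (y + 1) \<in> NN" "VE x (y + 1) \<notin> ?E'" using VE_notin by (auto simp: NN_def)
      moreover have "labQ (VE x (y + 1)) = hi k" using labQ[OF lohi_pm(2)] pQhi by simp
      ultimately show ?thesis by (simp add: extc_def)
    qed
    have vv: "vweight q t \<nu> z (extc \<pi> c') (x, y) = ?V" unfolding vweight_v e1 e2 e3 e4 ..
    have pr: "(\<Prod>u\<in>domp a0 n P Q'. vweight q t \<nu> z (extc \<pi> c') u) = (\<Prod>u\<in>domp a0 n P Q'. vweight q t \<nu> z c' u)"
      by (rule prod.cong[OF refl rest])
    show "(\<Prod>u\<in>domp a0 n P Q. vweight q t \<nu> z (extc \<pi> c') u) = ?V * (\<Prod>u\<in>domp a0 n P Q'. vweight q t \<nu> z c' u)"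
      unfolding dp(1) prod.insert[OF domp_finite dp(2)] vv pr ..
  qed
  also have "\<dots> = Pprob q t \<nu> z a0 n P Q' \<sigma> \<pi>' * ?V"
    unfolding Pprob_Cset by (simp add: sum_distrib_right mult.commute)
  finally show ?thesis using W by simp
qed


lemma in_Sset:
  assumes c: "c \<in> Cset a0 n P Q \<sigma> \<pi>" and p: "\<pi> \<in> signed_perms n" "\<pi>'' \<in> signed_perms n"
    and ag: "\<forall>j. j \<notin> {lo k, hi k, - lo k, - hi k} \<longrightarrow> \<pi>'' j = \<pi> j"
    and l1: "\<pi>'' (lo k) = c (VE x y)" and l2: "\<pi>'' (hi k) = c (HE x y)"
  shows "c \<in> Sset \<sigma> \<pi> \<pi>''"
proof -
  have c2: "\<forall>e\<in>dom_edges a0 n P Q. c (mir e) = - c e" and c3: "\<forall>j\<in>pm_set n. c (path_edge a0 n Q j) = \<pi> j"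
    using c by (auto simp: Cset_def)
  have neg: "\<pi>'' (- j) = - \<pi>'' j" for j using SP_D(2)[OF p(2)] .
  have m1: "c (HE y x) = - c (VE x y)" using c2 E_VE by (metis mir.simps(2))
  have m2: "c (VE y x) = - c (HE x y)" using c2 E_HE by (metis mir.simps(1))
  have "\<forall>j\<in>pm_set n. c (path_edge a0 n Q' j) = \<pi>'' j"
  proof
    fix j assume j: "j \<in> pm_set n"
    show "c (path_edge a0 n Q' j) = \<pi>'' j"
    proof (cases "j \<in> {lo k, hi k, - lo k, - hi k}")
      case True
      then have "j = lo k \<or> j = hi k \<or> j = - lo k \<or> j = - hi k" by simp
      then show ?thesis
      proof (elim disjE)
        assume "j = lo k" then show ?thesis using pQ'lo l1 by simp
      next
        assume "j = hi k" then show ?thesis using pQ'hi l2 by simp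
      next
        assume "j = - lo k" then show ?thesis using pQ'mlo l1 m1 neg[of "lo k"] by simp
      next
        assume "j = - hi k" then show ?thesis using pQ'mhi l2 m2 neg[of "hi k"] by simp
      qed
    next
      case False
      then show ?thesis using pQ'other[OF j False] c3 j ag by simp
    qed
  qed
  then show ?thesis using c by (simp add: Sset_def)
qed

lemma Pprob_decomp:
  assumes p: "\<pi> \<in> signed_perms n"
  shows "Pprob q t \<nu> z a0 n P Q \<sigma> \<pi>
       = (\<Sum>\<pi>'\<in>signed_perms n. Pprob q t \<nu> z a0 n P Q' \<sigma> \<pi>' * Wt k (pxy q t \<nu> z x y) (qpar q t k) \<pi>' \<pi>)"
proof -
  define F where "F c = (\<Prod>u\<in>domp a0 n P Q. vweight q t \<nu> z c u)" for c
  have fS: "finite (Sset \<sigma> \<pi> \<pi>')" for \<pi>'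
    using Cset_finite[of a0 n P Q \<sigma> \<pi>] by (rule finite_subset[rotated]) (auto simp: Sset_def)
  have disj: "\<forall>\<pi>1\<in>signed_perms n. \<forall>\<pi>2\<in>signed_perms n. \<pi>1 \<noteq> \<pi>2 \<longrightarrow> Sset \<sigma> \<pi> \<pi>1 \<inter> Sset \<sigma> \<pi> \<pi>2 = {}"
  proof (intro ballI impI)
    fix \<pi>1 \<pi>2 assume a: "\<pi>1 \<in> signed_perms n" "\<pi>2 \<in> signed_perms n" "\<pi>1 \<noteq> \<pi>2"
    show "Sset \<sigma> \<pi> \<pi>1 \<inter> Sset \<sigma> \<pi> \<pi>2 = {}"
    proof (rule ccontr)
      assume "Sset \<sigma> \<pi> \<pi>1 \<inter> Sset \<sigma> \<pi> \<pi>2 \<noteq> {}"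
      then obtain c where c: "c \<in> Sset \<sigma> \<pi> \<pi>1" "c \<in> Sset \<sigma> \<pi> \<pi>2" by blast
      have "\<pi>1 = \<pi>2"
      proof
        fix j show "\<pi>1 j = \<pi>2 j"
        proof (cases "j \<in> pm_set n")
          case True then show ?thesis using c by (auto simp: Sset_def)
        next
          case False then show ?thesis using SP_D(3)[OF a(1)] SP_D(3)[OF a(2)] by simp
        qed
      qed
      then show False using a by simp
    qed
  qed
  have "(\<Sum>\<pi>'\<in>signed_perms n. Pprob q t \<nu> z a0 n P Q' \<sigma> \<pi>' * Wt k (pxy q t \<nu> z x y) (qpar q t k) \<pi>' \<pi>)
      = (\<Sum>\<pi>'\<in>signed_perms n. \<Sum>c\<in>Sset \<sigma> \<pi> \<pi>'. F c)"
    unfolding F_def by (rule sum.cong[OF refl], rule S_sum[OF p, symmetric])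
  also have "\<dots> = (\<Sum>c\<in>(\<Union>\<pi>'\<in>signed_perms n. Sset \<sigma> \<pi> \<pi>'). F c)"
    by (rule sum.UNION_disjoint[symmetric]) (use SP_finite fS disj in auto)
  also have "\<dots> = (\<Sum>c\<in>Cset a0 n P Q \<sigma> \<pi>. F c)"
  proof (rule sum.mono_neutral_left)
    show "finite (Cset a0 n P Q \<sigma> \<pi>)" by (rule Cset_finite)
    show "(\<Union>\<pi>'\<in>signed_perms n. Sset \<sigma> \<pi> \<pi>') \<subseteq> Cset a0 n P Q \<sigma> \<pi>" by (auto simp: Sset_def)
    show "\<forall>c\<in>Cset a0 n P Q \<sigma> \<pi> - (\<Union>\<pi>'\<in>signed_perms n. Sset \<sigma> \<pi> \<pi>'). F c = 0"
    proof (rule ballI, rule ccontr)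
      fix c assume c: "c \<in> Cset a0 n P Q \<sigma> \<pi> - (\<Union>\<pi>'\<in>signed_perms n. Sset \<sigma> \<pi> \<pi>')" and nz: "F c \<noteq> 0"
      have cC: "c \<in> Cset a0 n P Q \<sigma> \<pi>" using c by blast
      have c3: "\<forall>j\<in>pm_set n. c (path_edge a0 n Q j) = \<pi> j" using cC by (auto simp: Cset_def)
      have "vweight q t \<nu> z c (x, y) \<noteq> 0"
        using nz v_domp domp_finite unfolding F_def by (metis prod_zero_iff)
      then have "Vw (pxy q t \<nu> z x y) (qpar q t k) (c (HE x y)) (c (VE x y)) (c (HE (x + 1) y)) (c (VE x (y + 1))) \<noteq> 0"
        unfolding vweight_v .
      then have d: "(c (HE (x + 1) y) = c (HE x y) \<and> c (VE x (y + 1)) = c (VE x y)) \<or>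
                 (c (HE (x + 1) y) = c (VE x y) \<and> c (VE x (y + 1)) = c (HE x y))" by (rule Vw_nz)
      have r: "c (HE (x + 1) y) = \<pi> (lo k)" using c3 lohi_pm pQlo by metis
      have u: "c (VE x (y + 1)) = \<pi> (hi k)" using c3 lohi_pm pQhi by metis
      have gk: "gen k \<in> signed_perms n" using gen_SP k_lt .
      from d show False
      proof
        assume s: "c (HE (x + 1) y) = c (HE x y) \<and> c (VE x (y + 1)) = c (VE x y)"
        have pg: "\<pi> \<circ> gen k \<in> signed_perms n" using SP_comp[OF p gk] .
        have "c \<in> Sset \<sigma> \<pi> (\<pi> \<circ> gen k)"
          by (rule in_Sset[OF cC p pg]) (use s r u gen_other in auto)
        then show False using c pg by blast
      next
        assume s: "c (HE (x + 1) y) = c (VE x y) \<and> c (VE x (y + 1)) = c (HE x y)"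
        have "c \<in> Sset \<sigma> \<pi> \<pi>"
          by (rule in_Sset[OF cC p p]) (use s r u in auto)
        then show False using c p by blast
      qed
    qed
  qed
  also have "\<dots> = Pprob q t \<nu> z a0 n P Q \<sigma> \<pi>" unfolding Pprob_Cset F_def ..
  finally show ?thesis ..
qed

end




lemma Tb_sum: "finite S \<Longrightarrow> (\<Sum>\<pi>\<in>S. f \<pi> * Tb \<pi> w) = (if w \<in> S then f w else (0::'a::field))"
proof -
  assume S: "finite S"
  have "(\<Sum>\<pi>\<in>S. f \<pi> * Tb \<pi> w) = (\<Sum>\<pi>\<in>S. if \<pi> = w then f \<pi> else 0)"
    by (rule sum.cong) (auto simp: Tb_def)
  also have "\<dots> = (if w \<in> S then f w else 0)" using S by (simp add: sum.delta')
  finally show ?thesis .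
qed

lemma rmulR_lin: "rmulR n q t k p (\<lambda>v. \<Sum>\<pi>\<in>S. c \<pi> * Tb \<pi> v) w = (\<Sum>\<pi>\<in>S. c \<pi> * rmulR n q t k p (Tb \<pi>) w)"
proof -
  define A where "A = (\<Sum>\<pi>\<in>S. c \<pi> * Tb \<pi> (w \<circ> gen k))"
  define B where "B = (\<Sum>\<pi>\<in>S. c \<pi> * Tb \<pi> w)"
  define qk where "qk = qpar q t k"
  show ?thesis
  proof (cases "clen n (w \<circ> gen k) < clen n w")
    case True
    have "(\<Sum>\<pi>\<in>S. c \<pi> * rmulR n q t k p (Tb \<pi>) w) = (\<Sum>\<pi>\<in>S. p * (c \<pi> * Tb \<pi> (w \<circ> gen k)) + (p * (1 - qk) + (1 - p)) * (c \<pi> * Tb \<pi> w))"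
      by (rule sum.cong) (simp_all add: rmulR_def rmulT_def True qk_def algebra_simps)
    also have "\<dots> = p * A + (p * (1 - qk) + (1 - p)) * B"
      by (simp add: sum.distrib sum_distrib_left A_def B_def)
    finally show ?thesis using True by (simp add: rmulR_def rmulT_def A_def[symmetric] B_def[symmetric] qk_def[symmetric] algebra_simps)
  next
    case False
    have "(\<Sum>\<pi>\<in>S. c \<pi> * rmulR n q t k p (Tb \<pi>) w) = (\<Sum>\<pi>\<in>S. (p * qk) * (c \<pi> * Tb \<pi> (w \<circ> gen k)) + (1 - p) * (c \<pi> * Tb \<pi> w))"
      by (rule sum.cong) (simp_all add: rmulR_def rmulT_def False qk_def algebra_simps)
    also have "\<dots> = (p * qk) * A + (1 - p) * B"
      by (simp add: sum.distrib sum_distrib_left A_def B_def)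
    finally show ?thesis using False by (simp add: rmulR_def rmulT_def A_def[symmetric] B_def[symmetric] qk_def[symmetric] algebra_simps)
  qed
qed

lemma mulY_snoc: "mulY n q t \<nu> z (L @ [(x, y)]) h = rmulR n q t (nat (y - x)) (pxy q t \<nu> z x y) (mulY n q t \<nu> z L h)"
  by (simp add: mulY_def)

lemma adm_last:
  assumes a: "admissible_order S (L @ [v])" and w: "w \<in> S" and le: "fst v \<le> fst w" "snd v \<le> snd w"
  shows "w = v"
proof -
  have d: "distinct (L @ [v])" and s: "set (L @ [v]) = S"
    and o: "\<forall>i < length (L @ [v]). \<forall>j < length (L @ [v]). fst ((L @ [v]) ! i) \<le> fst ((L @ [v]) ! j) \<and> snd ((L @ [v]) ! i) \<le> snd ((L @ [v]) ! j) \<longrightarrow> i \<le> j"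
    using a by (auto simp: admissible_order_def)
  obtain j where j: "j < length (L @ [v])" "(L @ [v]) ! j = w" using w s by (metis in_set_conv_nth)
  have "length L \<le> j" using o[rule_format, of "length L" j] j le by simp
  then have "j = length L" using j by simp
  then show ?thesis using j by simp
qed

lemma adm_butlast:
  assumes a: "admissible_order S (L @ [v])"
  shows "admissible_order (S - {v}) L"
proof -
  have d: "distinct (L @ [v])" and s: "set (L @ [v]) = S"
    and o: "\<forall>i < length (L @ [v]). \<forall>j < length (L @ [v]). fst ((L @ [v]) ! i) \<le> fst ((L @ [v]) ! j) \<and> snd ((L @ [v]) ! i) \<le> snd ((L @ [v]) ! j) \<longrightarrow> i \<le> j"
    using a by (auto simp: admissible_order_def)
  have "set L = S - {v}" using d s by auto
  moreover have "\<forall>i < length L. \<forall>j < length L. fst (L ! i) \<le> fst (L ! j) \<and> snd (L ! i) \<le> snd (L ! j) \<longrightarrow> i \<le> j"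
  proof (intro allI impI)
    fix i j assume ij: "i < length L" "j < length L" "fst (L ! i) \<le> fst (L ! j) \<and> snd (L ! i) \<le> snd (L ! j)"
    then show "i \<le> j" using o[rule_format, of i j] by (simp add: nth_append)
  qed
  ultimately show ?thesis using d by (simp add: admissible_order_def)
qed

lemma skew_empty:
  assumes d: "skew_domain n P Q" and e: "domp a0 n P Q = {}"
  shows "skew_dom a0 n P Q = {}"
proof (rule ccontr)
  assume "skew_dom a0 n P Q \<noteq> {}"
  then obtain x y where xy: "(x, y) \<in> skew_dom a0 n P Q" by auto
  show False
  proof (cases "x \<le> y")
    case True then show False using xy e by (auto simp: domp_def)
  next
    case False
    then have "(y, x) \<in> domp a0 n P Q" using skew_dom_sym[OF d xy] by (simp add: domp_def)
    then show False using e by simp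
  qed
qed

lemma empty_eq:
  assumes d: "skew_domain n P Q" and e: "domp a0 n P Q = {}"
  shows "Q = P"
proof -
  have sP: "sym_path n P" and sQ: "sym_path n Q" and le: "\<forall>m\<le>2*n. cntL Q m \<le> cntL P m"
    using d by (auto simp: skew_domain_def)
  have E: "skew_dom a0 n P Q = {}" using skew_empty[OF d e] .
  have eq: "cntL Q m = cntL P m" if m: "m \<le> 2 * n" for m
  proof (rule ccontr)
    assume "cntL Q m \<noteq> cntL P m"
    moreover have "cntL Q m \<le> cntL P m" using le m by simp
    ultimately have lt: "dual_a a0 P m < dual_a a0 Q m" by (simp add: dual_a_def)
    define x where "x = dual_a a0 Q m"
    have "(x, x + int m - int n) \<in> skew_dom a0 n P Q"
      unfolding skew_dom_iff using m lt by (simp add: x_def)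
    then show False using E by simp
  qed
  show ?thesis
  proof (rule nth_equalityI)
    show "length Q = length P" using sym_len[OF sP] sym_len[OF sQ] by simp
    fix r assume r: "r < length Q"
    then have r2: "r < 2 * n" using sym_len[OF sQ] by simp
    have "cntL Q (Suc r) = cntL Q r + (if Q ! r then 0 else 1)" using cntL_Suc r by blast
    moreover have "cntL P (Suc r) = cntL P r + (if P ! r then 0 else 1)" using cntL_Suc[of r P] r2 sym_len[OF sP] by simp
    moreover have "cntL Q (Suc r) = cntL P (Suc r)" "cntL Q r = cntL P r" using eq r2 by auto
    ultimately show "Q ! r = P ! r" by (auto split: if_splits)
  qed
qed

definition labP where "labP a0 n P e = (THE j. j \<in> pm_set n \<and> path_edge a0 n P j = e)"

lemma labP: "sym_path n P \<Longrightarrow> j \<in> pm_set n \<Longrightarrow> labP a0 n P (path_edge a0 n P j) = j"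
  unfolding labP_def by (rule the_equality) (use path_edge_inj in auto)

lemma base:
  assumes d: "skew_domain n P Q" and e: "domp a0 n P Q = {}"
    and s: "\<sigma> \<in> signed_perms n" and p: "\<pi> \<in> signed_perms n"
  shows "Pprob q t \<nu> z a0 n P Q \<sigma> \<pi> = (if \<pi> = \<sigma> then 1 else 0)"
proof -
  have QP: "Q = P" using empty_eq[OF d e] .
  have sP: "sym_path n P" using d by (simp add: skew_domain_def)
  have dP: "skew_domain n P P" using d QP by simp
  have E: "skew_dom a0 n P P = {}" using skew_empty[OF d e] QP by simp
  have DE: "dom_edges a0 n P P = path_edge a0 n P ` pm_set n" unfolding dom_edges_def E by auto
  have eP: "domp a0 n P P = {}" using e QP by simp
  show ?thesis
  proof (cases "\<pi> = \<sigma>")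
    case False
    obtain j where j: "\<pi> j \<noteq> \<sigma> j" using False by auto
    have jp: "j \<in> pm_set n"
    proof (rule ccontr)
      assume "j \<notin> pm_set n" then show False using j SP_D(3)[OF p] SP_D(3)[OF s] by metis
    qed
    have "Cset a0 n P P \<sigma> \<pi> = {}" using j jp by (auto simp: Cset_def)
    then show ?thesis unfolding Pprob_Cset QP using False by simp
  next
    case True
    define c0 where "c0 = (\<lambda>e. if e \<in> path_edge a0 n P ` pm_set n then \<sigma> (labP a0 n P e) else undefined)"
    have c0v: "c0 (path_edge a0 n P j) = \<sigma> j" if "j \<in> pm_set n" for j
      using that labP[OF sP that] by (auto simp: c0_def)
    have "Cset a0 n P P \<sigma> \<pi> = {c0}"
    proof
      show "Cset a0 n P P \<sigma> \<pi> \<subseteq> {c0}"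
      proof
        fix c assume c: "c \<in> Cset a0 n P P \<sigma> \<pi>"
        then have c1: "c \<in> Pi\<^sub>E (dom_edges a0 n P P) (\<lambda>_. pm_set n)"
          and c3: "\<forall>j\<in>pm_set n. c (path_edge a0 n P j) = \<sigma> j" by (auto simp: Cset_def)
        have "c = c0"
        proof
          fix e show "c e = c0 e"
          proof (cases "e \<in> path_edge a0 n P ` pm_set n")
            case True
            then obtain j where "j \<in> pm_set n" "e = path_edge a0 n P j" by auto
            then show ?thesis using c3 c0v by simp
          next
            case False
            then show ?thesis using PiE_arb[OF c1] DE by (simp add: c0_def)
          qed
        qed
        then show "c \<in> {c0}" by simp
      qed
    next
      have "c0 \<in> Pi\<^sub>E (dom_edges a0 n P P) (\<lambda>_. pm_set n)"
        unfolding DE using c0v SP_in[OF s] by (auto simp: PiE_iff c0_def extensional_def)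
      moreover have "\<forall>e\<in>dom_edges a0 n P P. c0 (mir e) = - c0 e"
      proof
        fix e assume "e \<in> dom_edges a0 n P P"
        then obtain j where j: "j \<in> pm_set n" "e = path_edge a0 n P j" unfolding DE by auto
        have mj: "- j \<in> pm_set n" using j by (auto simp: pm_iff)
        show "c0 (mir e) = - c0 e" using j mj mir_path_edge[OF sP j(1), of a0] c0v SP_D(2)[OF s] by simp
      qed
      moreover have "\<forall>j\<in>pm_set n. c0 (path_edge a0 n P j) = \<sigma> j \<and> c0 (path_edge a0 n P j) = \<pi> j"
        using c0v True by simp
      ultimately show "{c0} \<subseteq> Cset a0 n P P \<sigma> \<pi>" using True by (simp add: Cset_def)
    qed
    then show ?thesis unfolding Pprob_Cset QP eP using True by simp
  qed
qed

lemma rmulR_out: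
  assumes w: "w \<notin> signed_perms n" and p: "\<pi>' \<in> signed_perms n" and k: "k < n"
  shows "rmulR n q t k p (Tb \<pi>') w = 0"
proof -
  have "w \<circ> gen k \<notin> signed_perms n"
  proof
    assume "w \<circ> gen k \<in> signed_perms n"
    then have "w \<circ> gen k \<circ> gen k \<in> signed_perms n" using SP_comp gen_SP[OF k] by blast
    then show False using w by simp
  qed
  then have "w \<circ> gen k \<noteq> \<pi>'" "w \<noteq> \<pi>'" using w p by auto
  then show ?thesis by (simp add: rmulR_def rmulT_def Tb_def)
qed

lemma main:
  "skew_domain n P Q \<Longrightarrow> \<sigma> \<in> signed_perms n \<Longrightarrow> admissible_order (domp a0 n P Q) L \<Longrightarrow>
   mulY n q t \<nu> z L (Tb \<sigma>) w = (\<Sum>\<pi> \<in> signed_perms n. Pprob q t \<nu> z a0 n P Q \<sigma> \<pi> * Tb \<pi> w)"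
proof (induction L arbitrary: Q w rule: rev_induct)
  case Nil
  have e: "domp a0 n P Q = {}" using Nil.prems(3) by (simp add: admissible_order_def)
  have "(\<Sum>\<pi> \<in> signed_perms n. Pprob q t \<nu> z a0 n P Q \<sigma> \<pi> * Tb \<pi> w)
      = (\<Sum>\<pi> \<in> signed_perms n. (if \<pi> = \<sigma> then 1 else 0) * Tb \<pi> w)"
    by (rule sum.cong[OF refl]) (simp add: base[OF Nil.prems(1) e Nil.prems(2)])
  also have "\<dots> = (if w \<in> signed_perms n then (if w = \<sigma> then 1 else 0) else 0)" by (rule Tb_sum[OF SP_finite])
  also have "\<dots> = Tb \<sigma> w" using Nil.prems(2) by (auto simp: Tb_def)
  finally show ?case by (simp add: mulY_def)
next
  case (snoc v L)
  obtain x y where v: "v = (x, y)" by (cases v)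
  have adm: "admissible_order (domp a0 n P Q) (L @ [(x, y)])" using snoc.prems(3) v by simp
  have vd: "(x, y) \<in> domp a0 n P Q" using adm by (auto simp: admissible_order_def)
  then have vin: "(x, y) \<in> skew_dom a0 n P Q" and xley: "x \<le> y" by (auto simp: domp_def)
  have r_out: "(x + 1, y) \<notin> skew_dom a0 n P Q"
  proof
    assume a: "(x + 1, y) \<in> skew_dom a0 n P Q"
    show False
    proof (cases "x + 1 \<le> y")
      case True
      then have "(x + 1, y) \<in> domp a0 n P Q" using a by (simp add: domp_def)
      then show False using adm_last[OF adm, of "(x + 1, y)"] by simp
    next
      case False
      then have xy: "x = y" using xley by simp
      have "(y, x + 1) \<in> skew_dom a0 n P Q" using skew_dom_sym[OF snoc.prems(1) a] .
      then have "(x, x + 1) \<in> domp a0 n P Q" using xy by (simp add: domp_def)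
      then show False using adm_last[OF adm, of "(x, x + 1)"] xy by simp
    qed
  qed
  have u_out: "(x, y + 1) \<notin> skew_dom a0 n P Q"
  proof
    assume a: "(x, y + 1) \<in> skew_dom a0 n P Q"
    then have "(x, y + 1) \<in> domp a0 n P Q" using xley by (simp add: domp_def)
    then show False using adm_last[OF adm, of "(x, y + 1)"] by simp
  qed
  interpret cr: corner a0 n P Q x y
    by unfold_locales (use snoc.prems(1) vin xley r_out u_out in auto)
  have adm': "admissible_order (domp a0 n P cr.Q') L" using adm_butlast[OF adm] cr.domp' by simp
  have IH: "mulY n q t \<nu> z L (Tb \<sigma>) = (\<lambda>w. \<Sum>\<pi> \<in> signed_perms n. Pprob q t \<nu> z a0 n P cr.Q' \<sigma> \<pi> * Tb \<pi> w)"
    using snoc.IH[OF cr.domQ' snoc.prems(2) adm'] by (simp add: fun_eq_iff)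
  have kk: "nat (y - x) = cr.k" by (simp add: cr.k_def)
  have lhs: "mulY n q t \<nu> z (L @ [v]) (Tb \<sigma>) w
     = (\<Sum>\<pi>' \<in> signed_perms n. Pprob q t \<nu> z a0 n P cr.Q' \<sigma> \<pi>' * rmulR n q t cr.k (pxy q t \<nu> z x y) (Tb \<pi>') w)"
    unfolding v mulY_snoc IH kk by (rule rmulR_lin)
  show ?case
  proof (cases "w \<in> signed_perms n")
    case True
    have "(\<Sum>\<pi>' \<in> signed_perms n. Pprob q t \<nu> z a0 n P cr.Q' \<sigma> \<pi>' * rmulR n q t cr.k (pxy q t \<nu> z x y) (Tb \<pi>') w)
       = (\<Sum>\<pi>' \<in> signed_perms n. Pprob q t \<nu> z a0 n P cr.Q' \<sigma> \<pi>' * Wt cr.k (pxy q t \<nu> z x y) (qpar q t cr.k) \<pi>' w)"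
      by (rule sum.cong[OF refl]) (simp add: H_local[OF True _ cr.k_lt])
    also have "\<dots> = Pprob q t \<nu> z a0 n P Q \<sigma> w" by (rule cr.Pprob_decomp[OF True, symmetric])
    also have "\<dots> = (\<Sum>\<pi> \<in> signed_perms n. Pprob q t \<nu> z a0 n P Q \<sigma> \<pi> * Tb \<pi> w)"
      using Tb_sum[OF SP_finite[of n], where f="\<lambda>\<pi>. Pprob q t \<nu> z a0 n P Q \<sigma> \<pi>" and w=w] True by simp
    finally show ?thesis using lhs by simp
  next
    case False
    have "(\<Sum>\<pi>' \<in> signed_perms n. Pprob q t \<nu> z a0 n P cr.Q' \<sigma> \<pi>' * rmulR n q t cr.k (pxy q t \<nu> z x y) (Tb \<pi>') w) = 0"
      by (rule sum.neutral) (simp add: rmulR_out[OF False _ cr.k_lt])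
    moreover have "(\<Sum>\<pi> \<in> signed_perms n. Pprob q t \<nu> z a0 n P Q \<sigma> \<pi> * Tb \<pi> w) = 0"
      using Tb_sum[OF SP_finite[of n], where f="\<lambda>\<pi>. Pprob q t \<nu> z a0 n P Q \<sigma> \<pi>" and w=w] False by simp
    ultimately show ?thesis using lhs by simp
  qed
qed

theorem proposition2p3:
  fixes q t \<nu> :: "'a::field" and z :: "int \<Rightarrow> 'a"
    and n :: nat and a0 :: int and P Q :: "bool list"
    and \<sigma> :: "int \<Rightarrow> int" and L :: "(int \<times> int) list"
  assumes dom: "skew_domain n P Q"
    and pos: "\<forall>(x, y) \<in> skew_dom a0 n P Q. 1 \<le> x \<and> 1 \<le> y"
    and sig: "\<sigma> \<in> signed_perms n"
    and ord: "admissible_order (domp a0 n P Q) L"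
    and nu: "\<nu> \<noteq> 0"
    and gen1: "\<forall>(x, y) \<in> domp a0 n P Q. x \<noteq> y \<longrightarrow> z x * z y \<noteq> q"
    and gen2: "\<forall>(x, y) \<in> domp a0 n P Q. x = y \<longrightarrow> z x - \<nu> * t \<noteq> 0 \<and> z x + 1 / \<nu> \<noteq> 0"
  shows "\<forall>v. mulY n q t \<nu> z L (Tb \<sigma>) v
            = (\<Sum>\<pi> \<in> signed_perms n. Pprob q t \<nu> z a0 n P Q \<sigma> \<pi> * Tb \<pi> v)"
  using main[OF dom sig ord] by blast


end
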